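(* Let $F$ and $G$ be groups. The map $\mathfrak{F}\colon O(F)\times O(G)\to O(F*G)$ sending $(<_F,<_G)$ to the ordering $\prec$ of $F*G$ described in the context is continuous and injective.
   Context: For a group $H$, $O(H)$ is the set of all orderings of $H$ (strict total orders invariant under left and right multiplication), with topology whose basic open sets are, for finite $S\subset H$, the sets of orderings in which all elements of $S$ exceed the identity. Construction of $\prec=\mathfrak{F}(<_F,<_G)$: order $F\times G$ lexicographically ($(f,g)<(f',g')$ iff $f<_Ff'$, or $f=f'$ and $g<_Gg'$); in $R=\mathbb{Z}(F\times G)$ call a nonzero element positive if the coefficient of its largest group element is a positive integer. Let $\rho\colon F*G\to M_2(R[t])$ be the injective homomorphism with $\rho(f)=\begin{pmatrix} f&(f-1)t\\0&1\end{pmatrix}$ ($f\in F$), $\rho(g)=\begin{pmatrix}1&0\\(g-1)t&g\end{pmatrix}$ ($g\in G$). Order the matrix positions $(1,1)$, $(2,2)$, then the off-diagonal positions in a fixed order. A nonzero $M=\sum_iM_it^i$ ($M_i\in M_2(R)$) is positive if for the least $n$ with $M_n\ne0$ the first nonzero entry of $M_n$ is positive in $R$. Set $x\prec y$ iff $\rho(y)-\rho(x)$ is positive. *)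

theory Defs
  imports "HOL-Algebra.Group" "HOL-Analysis.Product_Topology"
begin

text \<open>An ordering of a group H: a strict total order on the carrier (given as the set of
  pairs (x,y) with x < y), invariant under left and right multiplication.\<close>
definition orderings :: "('g, 'm) monoid_scheme \<Rightarrow> 'g rel set" where
  "orderings H = {R. R \<subseteq> carrier H \<times> carrier H \<and> strict_linear_order_on (carrier H) R \<and>
      (\<forall>a\<in>carrier H. \<forall>x\<in>carrier H. \<forall>y\<in>carrier H. (x, y) \<in> R \<longrightarrow>
          (a \<otimes>\<^bsub>H\<^esub> x, a \<otimes>\<^bsub>H\<^esub> y) \<in> R \<and> (x \<otimes>\<^bsub>H\<^esub> a, y \<otimes>\<^bsub>H\<^esub> a) \<in> R)}"

definition ord_basic :: "('g, 'm) monoid_scheme \<Rightarrow> 'g set \<Rightarrow> 'g rel set" where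
  "ord_basic H S = {R \<in> orderings H. \<forall>s\<in>S. (\<one>\<^bsub>H\<^esub>, s) \<in> R}"

definition ord_topology :: "('g, 'm) monoid_scheme \<Rightarrow> 'g rel topology" where
  "ord_topology H = topology_generated_by {ord_basic H S | S. finite S \<and> S \<subseteq> carrier H}"

fun fp_valid :: "('a, 'c) monoid_scheme \<Rightarrow> ('b, 'd) monoid_scheme \<Rightarrow> 'a + 'b \<Rightarrow> bool" where
  "fp_valid F G (Inl f) = (f \<in> carrier F \<and> f \<noteq> \<one>\<^bsub>F\<^esub>)"
| "fp_valid F G (Inr g) = (g \<in> carrier G \<and> g \<noteq> \<one>\<^bsub>G\<^esub>)"

fun fp_reduced :: "('a, 'c) monoid_scheme \<Rightarrow> ('b, 'd) monoid_scheme \<Rightarrow> ('a + 'b) list \<Rightarrow> bool" where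
  "fp_reduced F G [] = True"
| "fp_reduced F G [l] = fp_valid F G l"
| "fp_reduced F G (l1 # l2 # w) =
     (fp_valid F G l1 \<and> isl l1 \<noteq> isl l2 \<and> fp_reduced F G (l2 # w))"

fun fp_cons :: "('a, 'c) monoid_scheme \<Rightarrow> ('b, 'd) monoid_scheme \<Rightarrow> 'a + 'b \<Rightarrow> ('a + 'b) list \<Rightarrow> ('a + 'b) list" where
  "fp_cons F G (Inl f) (Inl f' # w) =
     (if f \<otimes>\<^bsub>F\<^esub> f' = \<one>\<^bsub>F\<^esub> then w else Inl (f \<otimes>\<^bsub>F\<^esub> f') # w)"
| "fp_cons F G (Inr g) (Inr g' # w) =
     (if g \<otimes>\<^bsub>G\<^esub> g' = \<one>\<^bsub>G\<^esub> then w else Inr (g \<otimes>\<^bsub>G\<^esub> g') # w)"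
| "fp_cons F G l w = l # w"

definition free_product :: "('a, 'c) monoid_scheme \<Rightarrow> ('b, 'd) monoid_scheme \<Rightarrow> ('a + 'b) list monoid" where
  "free_product F G =
     \<lparr>carrier = {w. fp_reduced F G w},
      mult = (\<lambda>u v. foldr (fp_cons F G) u v),
      one = []\<rparr>"

text \<open>Elements of the group ring of a group H: functions H \<Rightarrow> int (only finitely supported
  ones on the carrier arise).\<close>
definition gr_delta :: "'g \<Rightarrow> ('g \<Rightarrow> int)" where
  "gr_delta x = (\<lambda>y. if y = x then 1 else 0)"

definition gr_conv :: "('g, 'm) monoid_scheme \<Rightarrow> ('g \<Rightarrow> int) \<Rightarrow> ('g \<Rightarrow> int) \<Rightarrow> ('g \<Rightarrow> int)" where
  "gr_conv H a b = (\<lambda>x. if x \<in> carrier H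
      then (\<Sum>y\<in>{y \<in> carrier H. a y \<noteq> 0}. a y * b (inv\<^bsub>H\<^esub> y \<otimes>\<^bsub>H\<^esub> x)) else 0)"

text \<open>A 2x2 matrix over R[t] is M i j n = coefficient (in R) of t^n in entry (i,j), i,j \<in> {0,1}.\<close>
type_synonym 'g pmat = "nat \<Rightarrow> nat \<Rightarrow> nat \<Rightarrow> 'g \<Rightarrow> int"

definition pmat_mult :: "('g, 'm) monoid_scheme \<Rightarrow> 'g pmat \<Rightarrow> 'g pmat \<Rightarrow> 'g pmat" where
  "pmat_mult H M N = (\<lambda>i j n x. \<Sum>k<2. \<Sum>m\<le>n. gr_conv H (M i k m) (N k j (n - m)) x)"

definition pmat_one :: "('g, 'm) monoid_scheme \<Rightarrow> 'g pmat" where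
  "pmat_one H = (\<lambda>i j n. if i = j \<and> n = 0 then gr_delta \<one>\<^bsub>H\<^esub> else (\<lambda>_. 0))"

text \<open>rho(f) = [[f, (f-1)t],[0,1]],  rho(g) = [[1,0],[(g-1)t, g]], with f = (f,1), g = (1,g).\<close>
fun rho_letter :: "('a, 'c) monoid_scheme \<Rightarrow> ('b, 'd) monoid_scheme \<Rightarrow> 'a + 'b \<Rightarrow> ('a \<times> 'b) pmat" where
  "rho_letter F G (Inl f) = (\<lambda>i j n.
     if (i, j, n) = (0, 0, 0) then gr_delta (f, \<one>\<^bsub>G\<^esub>)
     else if (i, j, n) = (0, 1, 1) then (\<lambda>x. gr_delta (f, \<one>\<^bsub>G\<^esub>) x - gr_delta (\<one>\<^bsub>F\<^esub>, \<one>\<^bsub>G\<^esub>) x)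
     else if (i, j, n) = (1, 1, 0) then gr_delta (\<one>\<^bsub>F\<^esub>, \<one>\<^bsub>G\<^esub>)
     else (\<lambda>_. 0))"
| "rho_letter F G (Inr g) = (\<lambda>i j n.
     if (i, j, n) = (0, 0, 0) then gr_delta (\<one>\<^bsub>F\<^esub>, \<one>\<^bsub>G\<^esub>)
     else if (i, j, n) = (1, 0, 1) then (\<lambda>x. gr_delta (\<one>\<^bsub>F\<^esub>, g) x - gr_delta (\<one>\<^bsub>F\<^esub>, \<one>\<^bsub>G\<^esub>) x)
     else if (i, j, n) = (1, 1, 0) then gr_delta (\<one>\<^bsub>F\<^esub>, g)
     else (\<lambda>_. 0))"

definition rho :: "('a, 'c) monoid_scheme \<Rightarrow> ('b, 'd) monoid_scheme \<Rightarrow> ('a + 'b) list \<Rightarrow> ('a \<times> 'b) pmat" where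
  "rho F G w = foldr (\<lambda>l M. pmat_mult (F \<times>\<times> G) (rho_letter F G l) M) w (pmat_one (F \<times>\<times> G))"

definition lex_ord :: "'a rel \<Rightarrow> 'b rel \<Rightarrow> ('a \<times> 'b) rel" where
  "lex_ord LF LG = {((f, g), (f', g')). (f, f') \<in> LF \<or> (f = f' \<and> (g, g') \<in> LG)}"

definition gr_pos :: "('a, 'c) monoid_scheme \<Rightarrow> ('b, 'd) monoid_scheme \<Rightarrow> 'a rel \<Rightarrow> 'b rel \<Rightarrow> ('a \<times> 'b \<Rightarrow> int) \<Rightarrow> bool" where
  "gr_pos F G LF LG a \<longleftrightarrow>
     (\<exists>m \<in> carrier F \<times> carrier G. a m > 0 \<and>
        (\<forall>y \<in> carrier F \<times> carrier G. a y \<noteq> 0 \<and> y \<noteq> m \<longrightarrow> (y, m) \<in> lex_ord LF LG))"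

definition gr_nonzero :: "('a, 'c) monoid_scheme \<Rightarrow> ('b, 'd) monoid_scheme \<Rightarrow> ('a \<times> 'b \<Rightarrow> int) \<Rightarrow> bool" where
  "gr_nonzero F G a \<longleftrightarrow> (\<exists>x \<in> carrier F \<times> carrier G. a x \<noteq> 0)"

text \<open>Order of matrix positions: (1,1), (2,2), (1,2), (2,1)  (0-based indices here).\<close>
definition positions :: "(nat \<times> nat) list" where
  "positions = [(0, 0), (1, 1), (0, 1), (1, 0)]"

definition pmat_pos :: "('a, 'c) monoid_scheme \<Rightarrow> ('b, 'd) monoid_scheme \<Rightarrow> 'a rel \<Rightarrow> 'b rel \<Rightarrow> ('a \<times> 'b) pmat \<Rightarrow> bool" where
  "pmat_pos F G LF LG M \<longleftrightarrow>
     (\<exists>n. (\<exists>(i, j) \<in> set positions. gr_nonzero F G (M i j n)) \<and>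
          (\<forall>m < n. \<forall>(i, j) \<in> set positions. \<not> gr_nonzero F G (M i j m)) \<and>
          (case filter (\<lambda>(i, j). gr_nonzero F G (M i j n)) positions of
              (i, j) # _ \<Rightarrow> gr_pos F G LF LG (M i j n)
            | [] \<Rightarrow> False))"

definition frakF :: "('a, 'c) monoid_scheme \<Rightarrow> ('b, 'd) monoid_scheme \<Rightarrow> 'a rel \<Rightarrow> 'b rel \<Rightarrow> ('a + 'b) list rel" where
  "frakF F G LF LG =
     {(x, y). x \<in> carrier (free_product F G) \<and> y \<in> carrier (free_product F G) \<and>
        pmat_pos F G LF LG (\<lambda>i j n z. rho F G y i j n z - rho F G x i j n z)}"

end

theory Submission
  imports Defs
begin

definition lsh :: "('g,'m) monoid_scheme \<Rightarrow> 'g \<Rightarrow> ('g \<Rightarrow> int) \<Rightarrow> ('g \<Rightarrow> int)" where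
  "lsh K h e = (\<lambda>x. if x \<in> carrier K then e (inv\<^bsub>K\<^esub> h \<otimes>\<^bsub>K\<^esub> x) else 0)"

definition rsh :: "('g,'m) monoid_scheme \<Rightarrow> 'g \<Rightarrow> ('g \<Rightarrow> int) \<Rightarrow> ('g \<Rightarrow> int)" where
  "rsh K h e = (\<lambda>x. if x \<in> carrier K then e (x \<otimes>\<^bsub>K\<^esub> inv\<^bsub>K\<^esub> h) else 0)"

context group begin

lemma lsh_add: "lsh G h (\<lambda>x. a x + b x) = (\<lambda>x. lsh G h a x + lsh G h b x)"
  by (auto simp: lsh_def)
lemma lsh_diff: "lsh G h (\<lambda>x. a x - b x) = (\<lambda>x. lsh G h a x - lsh G h b x)"
  by (auto simp: lsh_def)
lemma lsh_zero: "lsh G h (\<lambda>x. 0) = (\<lambda>x. 0)"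
  by (auto simp: lsh_def)
lemma rsh_add: "rsh G h (\<lambda>x. a x + b x) = (\<lambda>x. rsh G h a x + rsh G h b x)"
  by (auto simp: rsh_def)
lemma rsh_diff: "rsh G h (\<lambda>x. a x - b x) = (\<lambda>x. rsh G h a x - rsh G h b x)"
  by (auto simp: rsh_def)
lemma rsh_zero: "rsh G h (\<lambda>x. 0) = (\<lambda>x. 0)"
  by (auto simp: rsh_def)

lemma lsh_lsh: "h \<in> carrier G \<Longrightarrow> h' \<in> carrier G \<Longrightarrow> lsh G h (lsh G h' e) = lsh G (h \<otimes> h') e"
  by (auto simp: lsh_def inv_mult_group m_assoc)

lemma lsh_rsh: "h \<in> carrier G \<Longrightarrow> h' \<in> carrier G \<Longrightarrow> lsh G h (rsh G h' e) = rsh G h' (lsh G h e)"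
  by (auto simp: lsh_def rsh_def m_assoc)

lemma lsh_one: "(\<And>x. x \<notin> carrier G \<Longrightarrow> e x = 0) \<Longrightarrow> lsh G \<one> e = e"
  by (auto simp: lsh_def)
lemma rsh_one: "(\<And>x. x \<notin> carrier G \<Longrightarrow> e x = 0) \<Longrightarrow> rsh G \<one> e = e"
  by (auto simp: rsh_def)

lemma inv_mult_eq_one: "h \<in> carrier G \<Longrightarrow> x \<in> carrier G \<Longrightarrow> (inv h \<otimes> x = \<one>) = (x = h)"
proof
  assume h: "h \<in> carrier G" and x: "x \<in> carrier G" and e: "inv h \<otimes> x = \<one>"
  have "h \<otimes> (inv h \<otimes> x) = (h \<otimes> inv h) \<otimes> x" using h x by (simp only: m_assoc inv_closed)
  also have "\<dots> = x" using h x by simp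
  finally show "x = h" using e h by simp
next
  assume "h \<in> carrier G" "x = h" thus "inv h \<otimes> x = \<one>" by simp
qed
lemma mult_inv_eq_one: "h \<in> carrier G \<Longrightarrow> x \<in> carrier G \<Longrightarrow> (x \<otimes> inv h = \<one>) = (x = h)"
proof
  assume h: "h \<in> carrier G" and x: "x \<in> carrier G" and e: "x \<otimes> inv h = \<one>"
  have "(x \<otimes> inv h) \<otimes> h = x \<otimes> (inv h \<otimes> h)" using h x by (simp only: m_assoc inv_closed)
  also have "\<dots> = x" using h x by simp
  finally show "x = h" using e h by simp
next
  assume "h \<in> carrier G" "x = h" thus "x \<otimes> inv h = \<one>" by simp
qed

lemma lsh_delta: "h \<in> carrier G \<Longrightarrow> lsh G h (gr_delta \<one>) = gr_delta h"
  by (auto simp: lsh_def gr_delta_def inv_mult_eq_one)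
lemma rsh_delta: "h \<in> carrier G \<Longrightarrow> rsh G h (gr_delta \<one>) = gr_delta h"
  by (auto simp: rsh_def gr_delta_def mult_inv_eq_one)

lemma gr_conv_delta: "h \<in> carrier G \<Longrightarrow> gr_conv G (gr_delta h) b = lsh G h b"
proof -
  assume h: "h \<in> carrier G"
  have S: "{y \<in> carrier G. gr_delta h y \<noteq> 0} = {h}" using h by (auto simp: gr_delta_def)
  show ?thesis unfolding gr_conv_def lsh_def S by (rule ext) (simp add: gr_delta_def)
qed

lemma gr_conv_dd: "h \<in> carrier G \<Longrightarrow>
    gr_conv G (\<lambda>x. gr_delta h x - gr_delta \<one> x) b = (\<lambda>x. lsh G h b x - lsh G \<one> b x)"
proof -
  assume h: "h \<in> carrier G"
  show ?thesis
  proof (cases "h = \<one>")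
    case True
    have S: "{y \<in> carrier G. gr_delta h y - gr_delta \<one> y \<noteq> 0} = {}" using True by auto
    show ?thesis unfolding gr_conv_def lsh_def S using True by (intro ext) simp
  next
    case False
    have S: "{y \<in> carrier G. gr_delta h y - gr_delta \<one> y \<noteq> 0} = {h, \<one>}" using h False by (auto simp: gr_delta_def)
    show ?thesis unfolding gr_conv_def lsh_def S using False h by (intro ext) (simp add: gr_delta_def)
  qed
qed

lemma lsh_if0: "lsh G h (\<lambda>x. if P then 0 else a x) = (\<lambda>x. if P then 0 else lsh G h a x)"
  by (auto simp: lsh_def)
lemma rsh_if0: "rsh G h (\<lambda>x. if P then 0 else a x) = (\<lambda>x. if P then 0 else rsh G h a x)"
  by (auto simp: rsh_def)

lemma ordD: assumes "R \<in> orderings G"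
  shows "R \<subseteq> carrier G \<times> carrier G" "trans R" "irrefl R" "total_on (carrier G) R"
    "\<And>a x y. a \<in> carrier G \<Longrightarrow> x \<in> carrier G \<Longrightarrow> y \<in> carrier G \<Longrightarrow> (x, y) \<in> R \<Longrightarrow> (a \<otimes> x, a \<otimes> y) \<in> R"
    "\<And>a x y. a \<in> carrier G \<Longrightarrow> x \<in> carrier G \<Longrightarrow> y \<in> carrier G \<Longrightarrow> (x, y) \<in> R \<Longrightarrow> (x \<otimes> a, y \<otimes> a) \<in> R"
  using assms unfolding orderings_def strict_linear_order_on_def by auto

lemma ord_one: assumes R: "R \<in> orderings G" and x: "x \<in> carrier G" and y: "y \<in> carrier G"
  shows "((x, y) \<in> R) = ((\<one>, inv x \<otimes> y) \<in> R)"
proof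
  assume "(x, y) \<in> R"
  from ordD(5)[OF R _ x y this, of "inv x"] show "(\<one>, inv x \<otimes> y) \<in> R" using x by simp
next
  assume "(\<one>, inv x \<otimes> y) \<in> R"
  from ordD(5)[OF R x _ _ this] have "(x \<otimes> \<one>, x \<otimes> (inv x \<otimes> y)) \<in> R" using x y by simp
  moreover have "x \<otimes> (inv x \<otimes> y) = (x \<otimes> inv x) \<otimes> y" using x y by (simp only: m_assoc inv_closed)
  ultimately show "(x, y) \<in> R" using x y by simp
qed

lemma inv_cancel_l: "h \<in> carrier G \<Longrightarrow> m \<in> carrier G \<Longrightarrow> inv h \<otimes> (h \<otimes> m) = m"
proof -
  assume h: "h \<in> carrier G" and m: "m \<in> carrier G"
  have "inv h \<otimes> (h \<otimes> m) = (inv h \<otimes> h) \<otimes> m" using h m by (simp only: m_assoc inv_closed)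
  then show ?thesis using h m by simp
qed
lemma inv_cancel_r: "h \<in> carrier G \<Longrightarrow> m \<in> carrier G \<Longrightarrow> (m \<otimes> h) \<otimes> inv h = m"
proof -
  assume h: "h \<in> carrier G" and m: "m \<in> carrier G"
  have "(m \<otimes> h) \<otimes> inv h = m \<otimes> (h \<otimes> inv h)" using h m by (simp only: m_assoc inv_closed)
  then show ?thesis using h m by simp
qed

lemma inv_cancel_l': "h \<in> carrier G \<Longrightarrow> m \<in> carrier G \<Longrightarrow> h \<otimes> (inv h \<otimes> m) = m"
proof -
  assume h: "h \<in> carrier G" and m: "m \<in> carrier G"
  have "h \<otimes> (inv h \<otimes> m) = (h \<otimes> inv h) \<otimes> m" using h m by (simp only: m_assoc inv_closed)
  then show ?thesis using h m by simp
qed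

lemma ord_nbhd: assumes R0: "R0 \<in> orderings G" and fT: "finite T" and TC: "T \<subseteq> carrier G"
  shows "finite {inv a \<otimes> b | a b. a \<in> T \<and> b \<in> T \<and> (a, b) \<in> R0}"
    "{inv a \<otimes> b | a b. a \<in> T \<and> b \<in> T \<and> (a, b) \<in> R0} \<subseteq> carrier G"
    "R0 \<in> ord_basic G {inv a \<otimes> b | a b. a \<in> T \<and> b \<in> T \<and> (a, b) \<in> R0}"
    "\<And>R. R \<in> ord_basic G {inv a \<otimes> b | a b. a \<in> T \<and> b \<in> T \<and> (a, b) \<in> R0} \<Longrightarrow>
       \<forall>a\<in>T. \<forall>b\<in>T. ((a, b) \<in> R) = ((a, b) \<in> R0)"
proof -
  let ?A = "{inv a \<otimes> b | a b. a \<in> T \<and> b \<in> T \<and> (a, b) \<in> R0}"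
  have "?A \<subseteq> (\<lambda>(a, b). inv a \<otimes> b) ` (T \<times> T)" by auto
  then show "finite ?A" by (rule finite_subset) (simp add: fT)
  show "?A \<subseteq> carrier G" using TC by auto
  show "R0 \<in> ord_basic G ?A" unfolding ord_basic_def using R0 ord_one[OF R0] TC by auto
  fix R assume R: "R \<in> ord_basic G ?A"
  then have RO: "R \<in> orderings G" and R1: "\<And>x. x \<in> ?A \<Longrightarrow> (\<one>, x) \<in> R" unfolding ord_basic_def by auto
  show "\<forall>a\<in>T. \<forall>b\<in>T. ((a, b) \<in> R) = ((a, b) \<in> R0)"
  proof (intro ballI iffI)
    fix a b assume ab: "a \<in> T" "b \<in> T" and r0: "(a, b) \<in> R0"
    then have "(\<one>, inv a \<otimes> b) \<in> R" using R1 by blast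
    then show "(a, b) \<in> R" using ord_one[OF RO, of a b] ab TC by auto
  next
    fix a b assume ab: "a \<in> T" "b \<in> T" and r: "(a, b) \<in> R"
    show "(a, b) \<in> R0"
    proof (rule ccontr)
      assume n: "(a, b) \<notin> R0"
      have "a \<noteq> b" using r ordD(3)[OF RO] by (auto simp: irrefl_def)
      then have "(b, a) \<in> R0" using n ordD(4)[OF R0] ab TC by (auto simp: total_on_def)
      then have "(\<one>, inv b \<otimes> a) \<in> R" using R1 ab by blast
      then have "(b, a) \<in> R" using ord_one[OF RO, of b a] ab TC by auto
      then have "(a, a) \<in> R" using r ordD(2)[OF RO] by (auto dest: transD)
      then show False using ordD(3)[OF RO] by (auto simp: irrefl_def)
    qed
  qed
qed

lemma gr_conv_zero: "gr_conv G (\<lambda>x. 0) b = (\<lambda>x. 0)"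
  by (auto simp: gr_conv_def)

end


lemma sum_atMost_01: fixes c :: "nat \<Rightarrow> int" and n :: nat shows "(\<And>m. 2 \<le> m \<Longrightarrow> c m = (0::int)) \<Longrightarrow> (\<Sum>m\<le>n. c m) = c 0 + (if n = 0 then 0 else c 1)"
proof (induction n)
  case 0 then show ?case by simp
next
  case (Suc n) then show ?case by (cases n) auto
qed

fun lc :: "('a, 'c) monoid_scheme \<Rightarrow> ('b, 'd) monoid_scheme \<Rightarrow> 'a + 'b \<Rightarrow> bool" where
  "lc F G (Inl f) = (f \<in> carrier F)"
| "lc F G (Inr g) = (g \<in> carrier G)"

fun lop :: "('a, 'c) monoid_scheme \<Rightarrow> ('b, 'd) monoid_scheme \<Rightarrow> 'a + 'b \<Rightarrow> ('a \<times> 'b) pmat \<Rightarrow> ('a \<times> 'b) pmat" where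
  "lop F G (Inl f) M = (\<lambda>i j n. if i = 0 then (\<lambda>x. lsh (F\<times>\<times>G) (f, \<one>\<^bsub>G\<^esub>) (M 0 j n) x +
       (if n = 0 then 0 else lsh (F\<times>\<times>G) (f, \<one>\<^bsub>G\<^esub>) (M 1 j (n - 1)) x - lsh (F\<times>\<times>G) (\<one>\<^bsub>F\<^esub>, \<one>\<^bsub>G\<^esub>) (M 1 j (n - 1)) x))
     else if i = 1 then lsh (F\<times>\<times>G) (\<one>\<^bsub>F\<^esub>, \<one>\<^bsub>G\<^esub>) (M 1 j n) else (\<lambda>x. 0))"
| "lop F G (Inr g) M = (\<lambda>i j n. if i = 0 then lsh (F\<times>\<times>G) (\<one>\<^bsub>F\<^esub>, \<one>\<^bsub>G\<^esub>) (M 0 j n)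
     else if i = 1 then (\<lambda>x. lsh (F\<times>\<times>G) (\<one>\<^bsub>F\<^esub>, g) (M 1 j n) x +
       (if n = 0 then 0 else lsh (F\<times>\<times>G) (\<one>\<^bsub>F\<^esub>, g) (M 0 j (n - 1)) x - lsh (F\<times>\<times>G) (\<one>\<^bsub>F\<^esub>, \<one>\<^bsub>G\<^esub>) (M 0 j (n - 1)) x))
     else (\<lambda>x. 0))"

fun rop :: "('a, 'c) monoid_scheme \<Rightarrow> ('b, 'd) monoid_scheme \<Rightarrow> 'a + 'b \<Rightarrow> ('a \<times> 'b) pmat \<Rightarrow> ('a \<times> 'b) pmat" where
  "rop F G (Inl f) M = (\<lambda>i j n. if j = 0 then rsh (F\<times>\<times>G) (f, \<one>\<^bsub>G\<^esub>) (M i 0 n)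
     else if j = 1 then (\<lambda>x. rsh (F\<times>\<times>G) (\<one>\<^bsub>F\<^esub>, \<one>\<^bsub>G\<^esub>) (M i 1 n) x +
       (if n = 0 then 0 else rsh (F\<times>\<times>G) (f, \<one>\<^bsub>G\<^esub>) (M i 0 (n - 1)) x - rsh (F\<times>\<times>G) (\<one>\<^bsub>F\<^esub>, \<one>\<^bsub>G\<^esub>) (M i 0 (n - 1)) x))
     else (\<lambda>x. 0))"
| "rop F G (Inr g) M = (\<lambda>i j n. if j = 0 then (\<lambda>x. rsh (F\<times>\<times>G) (\<one>\<^bsub>F\<^esub>, \<one>\<^bsub>G\<^esub>) (M i 0 n) x +
       (if n = 0 then 0 else rsh (F\<times>\<times>G) (\<one>\<^bsub>F\<^esub>, g) (M i 1 (n - 1)) x - rsh (F\<times>\<times>G) (\<one>\<^bsub>F\<^esub>, \<one>\<^bsub>G\<^esub>) (M i 1 (n - 1)) x))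
     else if j = 1 then rsh (F\<times>\<times>G) (\<one>\<^bsub>F\<^esub>, g) (M i 1 n) else (\<lambda>x. 0))"


lemma fp_carrier: "carrier (free_product F G) = {w. fp_reduced F G w}"
  by (simp add: free_product_def)
lemma fp_mult: "x \<otimes>\<^bsub>free_product F G\<^esub> y = foldr (fp_cons F G) x y"
  by (simp add: free_product_def)
lemma fp_one: "\<one>\<^bsub>free_product F G\<^esub> = []"
  by (simp add: free_product_def)

locale fg = F: group F + G: group G
  for F :: "('a, 'c) monoid_scheme" and G :: "('b, 'd) monoid_scheme"
begin

sublocale K: group "F \<times>\<times> G"
  by (rule DirProd_group) (rule F.is_group, rule G.is_group)

declare carrier_DirProd[simp del]

abbreviation CC where "CC \<equiv> carrier (F\<times>\<times>G)"

lemma pair_in_K [simp]: "((a, b) \<in> carrier (F\<times>\<times>G)) = (a \<in> carrier F \<and> b \<in> carrier G)"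
  by (simp add: carrier_DirProd)

lemma inv_pair [simp]: "a \<in> carrier F \<Longrightarrow> b \<in> carrier G \<Longrightarrow> inv\<^bsub>F\<times>\<times>G\<^esub> (a, b) = (inv\<^bsub>F\<^esub> a, inv\<^bsub>G\<^esub> b)"
  by (rule inv_DirProd) (rule F.is_group, rule G.is_group)

definition Ione :: "('a \<times> 'b) pmat" where
  "Ione = (\<lambda>i j n. if i = j \<and> i < 2 \<and> n = 0 then gr_delta (\<one>\<^bsub>F\<^esub>, \<one>\<^bsub>G\<^esub>) else (\<lambda>x. 0))"

lemma gcd_K: "h \<in> carrier (F\<times>\<times>G) \<Longrightarrow> gr_conv (F\<times>\<times>G) (\<lambda>x. gr_delta h x - gr_delta (\<one>\<^bsub>F\<^esub>, \<one>\<^bsub>G\<^esub>) x) b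
   = (\<lambda>x. lsh (F\<times>\<times>G) h b x - lsh (F\<times>\<times>G) (\<one>\<^bsub>F\<^esub>, \<one>\<^bsub>G\<^esub>) b x)"
  using K.gr_conv_dd[of h b] by simp

lemma pm_letter: "lc F G l \<Longrightarrow> pmat_mult (F\<times>\<times>G) (rho_letter F G l) M = lop F G l M"
proof (cases l)
  case (Inl f)
  assume "lc F G l"
  then have f: "f \<in> carrier F" using Inl by simp
  show ?thesis unfolding Inl pmat_mult_def
    apply (intro ext)
    apply (subst sum_atMost_01)
     apply (simp add: K.gr_conv_zero)
    apply (simp add: numeral_2_eq_2 K.gr_conv_zero gcd_K f K.gr_conv_delta)
    done
next
  case (Inr g)
  assume "lc F G l"
  then have g: "g \<in> carrier G" using Inr by simp
  show ?thesis unfolding Inr pmat_mult_def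
    apply (intro ext)
    apply (subst sum_atMost_01)
     apply (simp add: K.gr_conv_zero)
    apply (simp add: numeral_2_eq_2 K.gr_conv_zero gcd_K g K.gr_conv_delta)
    done
qed


definition finsupp :: "('g \<Rightarrow> int) \<Rightarrow> bool" where
  "finsupp e \<longleftrightarrow> finite {x. e x \<noteq> 0}"

lemma finsupp_add: "finsupp a \<Longrightarrow> finsupp b \<Longrightarrow> finsupp (\<lambda>x. a x + b x)"
  unfolding finsupp_def by (rule finite_subset[of _ "{x. a x \<noteq> 0} \<union> {x. b x \<noteq> 0}"]) auto
lemma finsupp_diff: "finsupp a \<Longrightarrow> finsupp b \<Longrightarrow> finsupp (\<lambda>x. a x - b x)"
  unfolding finsupp_def by (rule finite_subset[of _ "{x. a x \<noteq> 0} \<union> {x. b x \<noteq> 0}"]) auto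
lemma finsupp_zero: "finsupp (\<lambda>x. 0)"
  unfolding finsupp_def by simp
lemma finsupp_delta: "finsupp (gr_delta h)"
  unfolding finsupp_def gr_delta_def by simp
lemma finsupp_delta': "finsupp (\<lambda>y. if y = h then 1 else 0)"
  unfolding finsupp_def by simp
lemma finsupp_if0: "(\<not> P \<Longrightarrow> finsupp a) \<Longrightarrow> finsupp (\<lambda>x. if P then 0 else a x)"
  unfolding finsupp_def by (cases P) auto

lemma finsupp_lsh: "finsupp e \<Longrightarrow> h \<in> carrier (F\<times>\<times>G) \<Longrightarrow> finsupp (lsh (F\<times>\<times>G) h e)"
  unfolding finsupp_def
proof (rule finite_subset[of _ "(\<lambda>y. h \<otimes>\<^bsub>F\<times>\<times>G\<^esub> y) ` {x. e x \<noteq> 0}"])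
  assume h: "h \<in> carrier (F\<times>\<times>G)"
  show "{x. lsh (F \<times>\<times> G) h e x \<noteq> 0} \<subseteq> (\<lambda>y. h \<otimes>\<^bsub>F\<times>\<times>G\<^esub> y) ` {x. e x \<noteq> 0}"
  proof
    fix x assume "x \<in> {x. lsh (F \<times>\<times> G) h e x \<noteq> 0}"
    then have x: "x \<in> carrier (F\<times>\<times>G)" and ne: "e (inv\<^bsub>F\<times>\<times>G\<^esub> h \<otimes>\<^bsub>F\<times>\<times>G\<^esub> x) \<noteq> 0"
      by (auto simp: lsh_def split: if_splits)
    have "x = h \<otimes>\<^bsub>F\<times>\<times>G\<^esub> (inv\<^bsub>F\<times>\<times>G\<^esub> h \<otimes>\<^bsub>F\<times>\<times>G\<^esub> x)"
      using h x by (simp add: K.m_assoc[symmetric])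
    then show "x \<in> (\<lambda>y. h \<otimes>\<^bsub>F\<times>\<times>G\<^esub> y) ` {x. e x \<noteq> 0}" using ne by blast
  qed
qed simp

lemma finsupp_rsh: "finsupp e \<Longrightarrow> h \<in> carrier (F\<times>\<times>G) \<Longrightarrow> finsupp (rsh (F\<times>\<times>G) h e)"
  unfolding finsupp_def
proof (rule finite_subset[of _ "(\<lambda>y. y \<otimes>\<^bsub>F\<times>\<times>G\<^esub> h) ` {x. e x \<noteq> 0}"])
  assume h: "h \<in> carrier (F\<times>\<times>G)"
  show "{x. rsh (F \<times>\<times> G) h e x \<noteq> 0} \<subseteq> (\<lambda>y. y \<otimes>\<^bsub>F\<times>\<times>G\<^esub> h) ` {x. e x \<noteq> 0}"
  proof
    fix x assume "x \<in> {x. rsh (F \<times>\<times> G) h e x \<noteq> 0}"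
    then have x: "x \<in> carrier (F\<times>\<times>G)" and ne: "e (x \<otimes>\<^bsub>F\<times>\<times>G\<^esub> inv\<^bsub>F\<times>\<times>G\<^esub> h) \<noteq> 0"
      by (auto simp: rsh_def split: if_splits)
    have "x = (x \<otimes>\<^bsub>F\<times>\<times>G\<^esub> inv\<^bsub>F\<times>\<times>G\<^esub> h) \<otimes>\<^bsub>F\<times>\<times>G\<^esub> h"
      using h x by (simp add: K.m_assoc)
    then show "x \<in> (\<lambda>y. y \<otimes>\<^bsub>F\<times>\<times>G\<^esub> h) ` {x. e x \<noteq> 0}" using ne by blast
  qed
qed simp

definition good :: "('a \<times> 'b) pmat \<Rightarrow> bool" where
  "good M \<longleftrightarrow> (\<forall>i j n x. (x \<notin> carrier (F\<times>\<times>G) \<or> 2 \<le> i \<or> 2 \<le> j) \<longrightarrow> M i j n x = 0) \<and>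
     (\<forall>i j n. finsupp (M i j n))"

lemma good_one: "good Ione"
  unfolding good_def Ione_def by (auto simp: gr_delta_def finsupp_delta' finsupp_zero)

lemma good_lop: assumes "good M" "lc F G l" shows "good (lop F G l M)"
proof (cases l)
  case (Inl f)
  then have f: "f \<in> carrier F" using assms by simp
  have z: "M i j n x = 0" if "x \<notin> carrier (F\<times>\<times>G) \<or> 2 \<le> i \<or> 2 \<le> j" for i j n x
    using assms(1) that unfolding good_def by blast
  have fs: "finsupp (M i j n)" for i j n using assms(1) unfolding good_def by blast
  have A: "\<forall>i j n x. (x \<notin> carrier (F\<times>\<times>G) \<or> 2 \<le> i \<or> 2 \<le> j) \<longrightarrow> lop F G l M i j n x = 0"
    unfolding Inl using f by (auto simp: lsh_def z)
  have B: "\<forall>i j n. finsupp (lop F G l M i j n)"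
    unfolding Inl using f by (auto simp: finsupp_zero intro!: finsupp_add finsupp_diff finsupp_if0 finsupp_lsh fs)
  show ?thesis unfolding good_def using A B by blast
next
  case (Inr g)
  then have g: "g \<in> carrier G" using assms by simp
  have z: "M i j n x = 0" if "x \<notin> carrier (F\<times>\<times>G) \<or> 2 \<le> i \<or> 2 \<le> j" for i j n x
    using assms(1) that unfolding good_def by blast
  have fs: "finsupp (M i j n)" for i j n using assms(1) unfolding good_def by blast
  have A: "\<forall>i j n x. (x \<notin> carrier (F\<times>\<times>G) \<or> 2 \<le> i \<or> 2 \<le> j) \<longrightarrow> lop F G l M i j n x = 0"
    unfolding Inr using g by (auto simp: lsh_def z)
  have B: "\<forall>i j n. finsupp (lop F G l M i j n)"
    unfolding Inr using g by (auto simp: finsupp_zero intro!: finsupp_add finsupp_diff finsupp_if0 finsupp_lsh fs)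
  show ?thesis unfolding good_def using A B by blast
qed

lemma good_rop: assumes "good M" "lc F G l" shows "good (rop F G l M)"
proof (cases l)
  case (Inl f)
  then have f: "f \<in> carrier F" using assms by simp
  have z: "M i j n x = 0" if "x \<notin> carrier (F\<times>\<times>G) \<or> 2 \<le> i \<or> 2 \<le> j" for i j n x
    using assms(1) that unfolding good_def by blast
  have fs: "finsupp (M i j n)" for i j n using assms(1) unfolding good_def by blast
  have A: "\<forall>i j n x. (x \<notin> carrier (F\<times>\<times>G) \<or> 2 \<le> i \<or> 2 \<le> j) \<longrightarrow> rop F G l M i j n x = 0"
    unfolding Inl using f by (auto simp: rsh_def z)
  have B: "\<forall>i j n. finsupp (rop F G l M i j n)"
    unfolding Inl using f by (auto simp: finsupp_zero intro!: finsupp_add finsupp_diff finsupp_if0 finsupp_rsh fs)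
  show ?thesis unfolding good_def using A B by blast
next
  case (Inr g)
  then have g: "g \<in> carrier G" using assms by simp
  have z: "M i j n x = 0" if "x \<notin> carrier (F\<times>\<times>G) \<or> 2 \<le> i \<or> 2 \<le> j" for i j n x
    using assms(1) that unfolding good_def by blast
  have fs: "finsupp (M i j n)" for i j n using assms(1) unfolding good_def by blast
  have A: "\<forall>i j n x. (x \<notin> carrier (F\<times>\<times>G) \<or> 2 \<le> i \<or> 2 \<le> j) \<longrightarrow> rop F G l M i j n x = 0"
    unfolding Inr using g by (auto simp: rsh_def z)
  have B: "\<forall>i j n. finsupp (rop F G l M i j n)"
    unfolding Inr using g by (auto simp: finsupp_zero intro!: finsupp_add finsupp_diff finsupp_if0 finsupp_rsh fs)
  show ?thesis unfolding good_def using A B by blast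
qed


lemmas shsimps = K.lsh_add K.lsh_diff K.lsh_zero K.lsh_if0 K.rsh_add K.rsh_diff K.rsh_zero K.rsh_if0

lemma lsh1_good: "good M \<Longrightarrow> lsh (F\<times>\<times>G) (\<one>\<^bsub>F\<^esub>, \<one>\<^bsub>G\<^esub>) (M i j n) = M i j n"
proof -
  assume "good M"
  then have "\<And>x. x \<notin> carrier (F\<times>\<times>G) \<Longrightarrow> M i j n x = 0" unfolding good_def by blast
  from K.lsh_one[of "M i j n", OF this] show ?thesis by simp
qed
lemma rsh1_good: "good M \<Longrightarrow> rsh (F\<times>\<times>G) (\<one>\<^bsub>F\<^esub>, \<one>\<^bsub>G\<^esub>) (M i j n) = M i j n"
proof -
  assume "good M"
  then have "\<And>x. x \<notin> carrier (F\<times>\<times>G) \<Longrightarrow> M i j n x = 0" unfolding good_def by blast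
  from K.rsh_one[of "M i j n", OF this] show ?thesis by simp
qed
lemma good_rows: "good M \<Longrightarrow> 2 \<le> i \<Longrightarrow> M i j n = (\<lambda>x. 0)"
  unfolding good_def by auto

lemma lop_comp_l: "f \<in> carrier F \<Longrightarrow> f' \<in> carrier F \<Longrightarrow>
    lop F G (Inl f) (lop F G (Inl f') M) = lop F G (Inl (f \<otimes>\<^bsub>F\<^esub> f')) M"
  by (rule ext)+ (simp add: shsimps K.lsh_lsh)

lemma lop_comp_r: "g \<in> carrier G \<Longrightarrow> g' \<in> carrier G \<Longrightarrow>
    lop F G (Inr g) (lop F G (Inr g') M) = lop F G (Inr (g \<otimes>\<^bsub>G\<^esub> g')) M"
  by (rule ext)+ (simp add: shsimps K.lsh_lsh)

lemma lop_one_l: "good M \<Longrightarrow> lop F G (Inl \<one>\<^bsub>F\<^esub>) M = M"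
  by (rule ext)+ (auto simp: lsh1_good good_rows)
lemma lop_one_r: "good M \<Longrightarrow> lop F G (Inr \<one>\<^bsub>G\<^esub>) M = M"
  by (rule ext)+ (auto simp: lsh1_good good_rows)

lemma lop_rop: "lc F G l \<Longrightarrow> lc F G r \<Longrightarrow> lop F G l (rop F G r M) = rop F G r (lop F G l M)"
  by (cases l; cases r; (rule ext)+) (simp_all add: shsimps K.lsh_rsh)

lemma lshd: "h \<in> carrier (F\<times>\<times>G) \<Longrightarrow> lsh (F\<times>\<times>G) h (gr_delta (\<one>\<^bsub>F\<^esub>, \<one>\<^bsub>G\<^esub>)) = gr_delta h"
  using K.lsh_delta[of h] by simp
lemma rshd: "h \<in> carrier (F\<times>\<times>G) \<Longrightarrow> rsh (F\<times>\<times>G) h (gr_delta (\<one>\<^bsub>F\<^esub>, \<one>\<^bsub>G\<^esub>)) = gr_delta h"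
  using K.rsh_delta[of h] by simp

lemma lop_Ione: "lc F G l \<Longrightarrow> lop F G l Ione = rop F G l Ione"
  by (cases l; (rule ext)+) (auto simp: Ione_def shsimps lshd rshd)

lemma lop_sub: "lop F G l (\<lambda>i j n x. M i j n x - N i j n x) = (\<lambda>i j n x. lop F G l M i j n x - lop F G l N i j n x)"
  by (cases l; (rule ext)+) (simp_all add: shsimps)
lemma rop_sub: "rop F G l (\<lambda>i j n x. M i j n x - N i j n x) = (\<lambda>i j n x. rop F G l M i j n x - rop F G l N i j n x)"
  by (cases l; (rule ext)+) (simp_all add: shsimps)


definition lcw :: "('a + 'b) list \<Rightarrow> bool" where
  "lcw w \<longleftrightarrow> (\<forall>l \<in> set w. lc F G l)"

definition Lw :: "('a + 'b) list \<Rightarrow> ('a \<times> 'b) pmat \<Rightarrow> ('a \<times> 'b) pmat" where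
  "Lw w M = foldr (lop F G) w M"
definition Rw :: "('a + 'b) list \<Rightarrow> ('a \<times> 'b) pmat \<Rightarrow> ('a \<times> 'b) pmat" where
  "Rw w M = foldl (\<lambda>M l. rop F G l M) M w"
definition rhoP :: "('a + 'b) list \<Rightarrow> ('a \<times> 'b) pmat" where
  "rhoP w = Lw w Ione"

lemma Lw_simps [simp]: "Lw [] M = M" "Lw (l # w) M = lop F G l (Lw w M)"
  by (simp_all add: Lw_def)
lemma Rw_simps [simp]: "Rw [] M = M" "Rw (l # w) M = Rw w (rop F G l M)"
  by (simp_all add: Rw_def)
lemma lcw_simps [simp]: "lcw []" "lcw (l # w) = (lc F G l \<and> lcw w)"
  by (simp_all add: lcw_def)

lemma good_Lw: "good M \<Longrightarrow> lcw w \<Longrightarrow> good (Lw w M)"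
  by (induction w) (auto intro: good_lop)
lemma good_Rw: "good M \<Longrightarrow> lcw w \<Longrightarrow> good (Rw w M)"
  by (induction w arbitrary: M) (auto intro: good_rop)
lemma good_rhoP: "lcw w \<Longrightarrow> good (rhoP w)"
  unfolding rhoP_def by (rule good_Lw[OF good_one])

lemma lop_agree: assumes "\<And>i j. i < 2 \<Longrightarrow> j < 2 \<Longrightarrow> M i j = N i j" "i < 2" "j < 2"
  shows "lop F G l M i j = lop F G l N i j"
proof -
  have e: "M 0 j = N 0 j" "M 1 j = N 1 j" using assms by auto
  show ?thesis by (cases l) (simp_all only: lop.simps e)
qed

lemma rho_agree: "lcw w \<Longrightarrow> i < 2 \<Longrightarrow> j < 2 \<Longrightarrow> rho F G w i j = rhoP w i j"
proof (induction w arbitrary: i j)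
  case Nil
  then show ?case by (auto simp: rho_def rhoP_def pmat_one_def Ione_def)
next
  case (Cons l w)
  have "rho F G (l # w) = pmat_mult (F\<times>\<times>G) (rho_letter F G l) (rho F G w)" by (simp add: rho_def)
  also have "\<dots> = lop F G l (rho F G w)" using Cons.prems by (simp add: pm_letter)
  finally have "rho F G (l # w) i j = lop F G l (rho F G w) i j" by simp
  also have "\<dots> = lop F G l (rhoP w) i j"
    by (rule lop_agree) (use Cons in auto)
  finally show ?case by (simp add: rhoP_def)
qed

lemma lop_Rw: "lc F G l \<Longrightarrow> lcw a \<Longrightarrow> lop F G l (Rw a M) = Rw a (lop F G l M)"
  by (induction a arbitrary: M) (auto simp: lop_rop)
lemma Lw_Rw: "lcw x \<Longrightarrow> lcw a \<Longrightarrow> Lw x (Rw a M) = Rw a (Lw x M)"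
  by (induction x) (auto simp: lop_Rw)
lemma rhoP_Rw: "lcw a \<Longrightarrow> rhoP a = Rw a Ione"
proof (induction a)
  case Nil then show ?case by (simp add: rhoP_def)
next
  case (Cons l a)
  then have "rhoP (l # a) = lop F G l (Rw a Ione)" by (simp add: rhoP_def)
  also have "\<dots> = Rw a (lop F G l Ione)" using Cons.prems by (simp add: lop_Rw)
  also have "\<dots> = Rw (l # a) Ione" using Cons.prems by (simp add: lop_Ione)
  finally show ?case .
qed

lemma Lw_sub: "Lw x (\<lambda>i j n z. M i j n z - N i j n z) = (\<lambda>i j n z. Lw x M i j n z - Lw x N i j n z)"
  by (induction x) (simp_all add: lop_sub)
lemma Rw_sub: "Rw x (\<lambda>i j n z. M i j n z - N i j n z) = (\<lambda>i j n z. Rw x M i j n z - Rw x N i j n z)"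
  by (induction x arbitrary: M N) (simp_all add: rop_sub)

lemma lc_fp_cons: "lc F G l \<Longrightarrow> lcw w \<Longrightarrow> lcw (fp_cons F G l w)"
  by (cases w; cases l; cases "hd w") auto

lemma rhoP_fp_cons: assumes "lc F G l" "lcw w" shows "rhoP (fp_cons F G l w) = lop F G l (rhoP w)"
proof (cases w)
  case Nil
  then show ?thesis by (cases l) (simp_all add: rhoP_def)
next
  case (Cons a w')
  have w': "lcw w'" "lc F G a" using assms Cons by auto
  show ?thesis
  proof (cases l; cases a)
    fix f f' assume l: "l = Inl f" and a: "a = Inl f'"
    have f: "f \<in> carrier F" "f' \<in> carrier F" using assms w' l a by auto
    have key: "lop F G l (rhoP w) = lop F G (Inl (f \<otimes>\<^bsub>F\<^esub> f')) (rhoP w')"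
      using f by (simp add: l a Cons rhoP_def lop_comp_l del: lop.simps)
    show ?thesis
    proof (cases "f \<otimes>\<^bsub>F\<^esub> f' = \<one>\<^bsub>F\<^esub>")
      case True
      then show ?thesis using key lop_one_l[OF good_rhoP[OF w'(1)]] by (simp add: l a Cons)
    next
      case False
      then show ?thesis using key by (simp add: l a Cons rhoP_def)
    qed
  next
    fix g g' assume l: "l = Inr g" and a: "a = Inr g'"
    have g: "g \<in> carrier G" "g' \<in> carrier G" using assms w' l a by auto
    have key: "lop F G l (rhoP w) = lop F G (Inr (g \<otimes>\<^bsub>G\<^esub> g')) (rhoP w')"
      using g by (simp add: l a Cons rhoP_def lop_comp_r del: lop.simps)
    show ?thesis
    proof (cases "g \<otimes>\<^bsub>G\<^esub> g' = \<one>\<^bsub>G\<^esub>")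
      case True
      then show ?thesis using key lop_one_r[OF good_rhoP[OF w'(1)]] by (simp add: l a Cons)
    next
      case False
      then show ?thesis using key by (simp add: l a Cons rhoP_def)
    qed
  qed (simp_all add: Cons rhoP_def)
qed

lemma lcw_mult: "lcw x \<Longrightarrow> lcw a \<Longrightarrow> lcw (foldr (fp_cons F G) x a)"
  by (induction x) (auto intro: lc_fp_cons)

lemma rhoP_mult: "lcw x \<Longrightarrow> lcw a \<Longrightarrow> rhoP (foldr (fp_cons F G) x a) = Lw x (rhoP a)"
  by (induction x) (auto simp: rhoP_fp_cons lcw_mult)

lemma rhoP_mult_right: "lcw x \<Longrightarrow> lcw a \<Longrightarrow> rhoP (foldr (fp_cons F G) x a) = Rw a (rhoP x)"
proof -
  assume x: "lcw x" and a: "lcw a"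
  have "rhoP (foldr (fp_cons F G) x a) = Lw x (Rw a Ione)" using x a by (simp add: rhoP_mult rhoP_Rw[OF a])
  also have "\<dots> = Rw a (rhoP x)" using x a by (simp add: Lw_Rw rhoP_def)
  finally show ?thesis .
qed

lemma fp_reduced_cons: "fp_reduced F G (l # v) = (fp_valid F G l \<and> fp_reduced F G v \<and> (v = [] \<or> isl l \<noteq> isl (hd v)))"
  by (cases v) auto

lemma valid_lc: "fp_valid F G l \<Longrightarrow> lc F G l"
  by (cases l) auto

lemma reduced_lcw: "fp_reduced F G w \<Longrightarrow> lcw w"
  by (induction w) (auto simp: fp_reduced_cons valid_lc)

lemma reduced_fp_cons: "fp_valid F G l \<Longrightarrow> fp_reduced F G w \<Longrightarrow> fp_reduced F G (fp_cons F G l w)"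
  by (cases w; cases l; cases "hd w") (auto simp: fp_reduced_cons)

lemma reduced_valid: "fp_reduced F G w \<Longrightarrow> l \<in> set w \<Longrightarrow> fp_valid F G l"
  by (induction w) (auto simp: fp_reduced_cons)

lemma reduced_mult: "fp_reduced F G x \<Longrightarrow> fp_reduced F G a \<Longrightarrow> fp_reduced F G (foldr (fp_cons F G) x a)"
  by (induction x) (auto simp: fp_reduced_cons intro: reduced_fp_cons)

end

locale fgo = fg F G for F :: "('a, 'c) monoid_scheme" and G :: "('b, 'd) monoid_scheme" +
  fixes LF :: "'a rel" and LG :: "'b rel"
  assumes LF: "LF \<in> orderings F" and LG: "LG \<in> orderings G"
begin

abbreviation lx where "lx \<equiv> lex_ord LF LG"

lemma lx_iff: "(((a1, a2), (b1, b2)) \<in> lx) = ((a1, b1) \<in> LF \<or> (a1 = b1 \<and> (a2, b2) \<in> LG))"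
  by (simp add: lex_ord_def)

lemma LFi: "(a, a) \<notin> LF" using F.ordD(3)[OF LF] by (simp add: irrefl_def)
lemma LGi: "(a, a) \<notin> LG" using G.ordD(3)[OF LG] by (simp add: irrefl_def)
lemma LFt: "(a, b) \<in> LF \<Longrightarrow> (b, c) \<in> LF \<Longrightarrow> (a, c) \<in> LF" using F.ordD(2)[OF LF] by (rule transD)
lemma LGt: "(a, b) \<in> LG \<Longrightarrow> (b, c) \<in> LG \<Longrightarrow> (a, c) \<in> LG" using G.ordD(2)[OF LG] by (rule transD)
lemma LFtot: "a \<in> carrier F \<Longrightarrow> b \<in> carrier F \<Longrightarrow> a \<noteq> b \<Longrightarrow> (a, b) \<in> LF \<or> (b, a) \<in> LF"
  using F.ordD(4)[OF LF] by (simp add: total_on_def)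
lemma LGtot: "a \<in> carrier G \<Longrightarrow> b \<in> carrier G \<Longrightarrow> a \<noteq> b \<Longrightarrow> (a, b) \<in> LG \<or> (b, a) \<in> LG"
  using G.ordD(4)[OF LG] by (simp add: total_on_def)
lemma LFsub: "(a, b) \<in> LF \<Longrightarrow> a \<in> carrier F \<and> b \<in> carrier F" using F.ordD(1)[OF LF] by auto
lemma LGsub: "(a, b) \<in> LG \<Longrightarrow> a \<in> carrier G \<and> b \<in> carrier G" using G.ordD(1)[OF LG] by auto

lemma lx_irrefl: "(a, a) \<notin> lx"
  by (cases a) (simp add: lx_iff LFi LGi)

lemma lx_trans: "(a, b) \<in> lx \<Longrightarrow> (b, c) \<in> lx \<Longrightarrow> (a, c) \<in> lx"
  by (cases a; cases b; cases c) (auto simp: lx_iff intro: LFt LGt)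

lemma lx_total: "a \<in> CC \<Longrightarrow> b \<in> CC \<Longrightarrow> a \<noteq> b \<Longrightarrow> (a, b) \<in> lx \<or> (b, a) \<in> lx"
  by (cases a; cases b) (auto simp: lx_iff dest: LFtot LGtot)

lemma lx_asym: "(a, b) \<in> lx \<Longrightarrow> (b, a) \<notin> lx"
  using lx_trans lx_irrefl by blast

lemma lx_left: "k \<in> CC \<Longrightarrow> a \<in> CC \<Longrightarrow> b \<in> CC \<Longrightarrow> (a, b) \<in> lx \<Longrightarrow> (k \<otimes>\<^bsub>F\<times>\<times>G\<^esub> a, k \<otimes>\<^bsub>F\<times>\<times>G\<^esub> b) \<in> lx"
  by (cases a; cases b; cases k) (auto simp: lx_iff intro: F.ordD(5)[OF LF] G.ordD(5)[OF LG])

lemma lx_right: "k \<in> CC \<Longrightarrow> a \<in> CC \<Longrightarrow> b \<in> CC \<Longrightarrow> (a, b) \<in> lx \<Longrightarrow> (a \<otimes>\<^bsub>F\<times>\<times>G\<^esub> k, b \<otimes>\<^bsub>F\<times>\<times>G\<^esub> k) \<in> lx"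
  by (cases a; cases b; cases k) (auto simp: lx_iff intro: F.ordD(6)[OF LF] G.ordD(6)[OF LG])

lemma lx_max: "finite S \<Longrightarrow> S \<noteq> {} \<Longrightarrow> S \<subseteq> CC \<Longrightarrow> \<exists>m\<in>S. \<forall>y\<in>S. y \<noteq> m \<longrightarrow> (y, m) \<in> lx"
proof (induction S rule: finite_ne_induct)
  case (singleton x) then show ?case by simp
next
  case (insert x S)
  then obtain m where m: "m \<in> S" "\<forall>y\<in>S. y \<noteq> m \<longrightarrow> (y, m) \<in> lx" by auto
  show ?case
  proof (cases "(m, x) \<in> lx")
    case True
    then show ?thesis using m by (auto intro: lx_trans)
  next
    case False
    then have "x = m \<or> (x, m) \<in> lx" using lx_total[of x m] insert.prems m by auto
    then show ?thesis using m by auto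
  qed
qed


definition ent :: "('a \<times> 'b) pmat \<Rightarrow> nat \<Rightarrow> nat \<Rightarrow> ('a \<times> 'b) \<Rightarrow> int" where
  "ent M q n k = M (fst (positions ! q)) (snd (positions ! q)) n k"

lemma ent_simps: "ent M 0 = M 0 0" "ent M 1 = M 1 1" "ent M 2 = M 0 1" "ent M 3 = M 1 0" "ent M (Suc 0) = M 1 1"
  by (auto simp: ent_def positions_def numeral_eq_Suc intro!: ext)

lemma all_less4: "(\<forall>q<4. P q) = (P 0 \<and> P 1 \<and> P 2 \<and> P (3::nat))"
  by (auto simp: numeral_eq_Suc less_Suc_eq)
lemma ex_less4: "(\<exists>q<4. P q) = (P 0 \<or> P 1 \<or> P 2 \<or> P (3::nat))"
  by (auto simp: numeral_eq_Suc less_Suc_eq)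
lemma all_less3: "(\<forall>q<3. P q) = (P 0 \<and> P 1 \<and> P (2::nat))"
  by (auto simp: numeral_eq_Suc less_Suc_eq)
lemma all_less2: "(\<forall>q<2. P q) = (P 0 \<and> P (1::nat))"
  by (auto simp: numeral_eq_Suc less_Suc_eq)
lemma all_less1: "(\<forall>q<1. P q) = P (0::nat)"
  by auto

definition idxl :: "nat \<Rightarrow> nat \<Rightarrow> ('a \<times> 'b) \<Rightarrow> nat \<Rightarrow> nat \<Rightarrow> ('a \<times> 'b) \<Rightarrow> bool" where
  "idxl n' q' k' n q k \<longleftrightarrow> n' < n \<or> (n' = n \<and> q' < q) \<or> (n' = n \<and> q' = q \<and> (k, k') \<in> lx)"

definition Pos :: "('a \<times> 'b) pmat \<Rightarrow> bool" where
  "Pos M \<longleftrightarrow> (\<exists>n q k. q < 4 \<and> k \<in> CC \<and> 0 < ent M q n k \<and>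
      (\<forall>n' q' k'. q' < 4 \<longrightarrow> k' \<in> CC \<longrightarrow> idxl n' q' k' n q k \<longrightarrow> ent M q' n' k' = 0))"

definition lowc :: "('a \<times> 'b) pmat \<Rightarrow> nat \<Rightarrow> nat \<Rightarrow> ('a \<times> 'b) \<Rightarrow> bool" where
  "lowc M n q m \<longleftrightarrow> q < 4 \<and> m \<in> CC \<and> 0 < ent M q n m \<and>
     (\<forall>n'<n. \<forall>q'<4. \<forall>k\<in>CC. ent M q' n' k = 0) \<and> (\<forall>q'<q. \<forall>k\<in>CC. ent M q' n k = 0) \<and>
     (\<forall>k\<in>CC. ent M q n k \<noteq> 0 \<longrightarrow> k \<noteq> m \<longrightarrow> (k, m) \<in> lx)"

lemma idxl_trans: "idxl n1 q1 k1 n2 q2 k2 \<Longrightarrow> idxl n2 q2 k2 n3 q3 k3 \<Longrightarrow> idxl n1 q1 k1 n3 q3 k3"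
  unfolding idxl_def by (auto intro: lx_trans)

lemma idxl_total: "k1 \<in> CC \<Longrightarrow> k2 \<in> CC \<Longrightarrow> (n1, q1, k1) \<noteq> (n2, q2, k2) \<Longrightarrow>
    idxl n1 q1 k1 n2 q2 k2 \<or> idxl n2 q2 k2 n1 q1 k1"
  unfolding idxl_def using lx_total[of k1 k2] by auto

lemma Pos_iff: "Pos M = (\<exists>n q m. lowc M n q m)"
proof
  assume "Pos M"
  then obtain n q k where A: "q < 4" "k \<in> CC" "0 < ent M q n k"
    "\<forall>n' q' k'. q' < 4 \<longrightarrow> k' \<in> CC \<longrightarrow> idxl n' q' k' n q k \<longrightarrow> ent M q' n' k' = 0"
    unfolding Pos_def by blast
  have "lowc M n q k"
    unfolding lowc_def
  proof (intro conjI ballI allI impI)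
    fix k' assume k': "k' \<in> CC" "ent M q n k' \<noteq> 0" "k' \<noteq> k"
    show "(k', k) \<in> lx"
    proof (rule ccontr)
      assume "(k', k) \<notin> lx"
      then have "(k, k') \<in> lx" using lx_total[of k' k] k' A(2) by auto
      then have "idxl n q k' n q k" by (simp add: idxl_def)
      then have "ent M q n k' = 0" using A(4) k'(1) A(1) by blast
      then show False using k'(2) by simp
    qed
  qed (use A in \<open>auto simp: idxl_def\<close>)
  then show "\<exists>n q m. lowc M n q m" by blast
next
  assume "\<exists>n q m. lowc M n q m"
  then obtain n q m where L: "lowc M n q m" by blast
  show "Pos M" unfolding Pos_def
  proof (intro exI conjI allI impI)
    show "q < 4" "m \<in> CC" "0 < ent M q n m" using L by (auto simp: lowc_def)
    fix n' q' k' assume q': "q' < 4" and k': "k' \<in> CC" and i: "idxl n' q' k' n q m"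
    show "ent M q' n' k' = 0"
    proof (cases "n' < n \<or> (n' = n \<and> q' < q)")
      case True then show ?thesis using L q' k' by (auto simp: lowc_def)
    next
      case False
      then have e: "n' = n" "q' = q" "(m, k') \<in> lx" using i by (auto simp: idxl_def)
      show ?thesis
      proof (rule ccontr)
        assume "ent M q' n' k' \<noteq> 0"
        moreover have "k' \<noteq> m" using e(3) lx_irrefl[of m] by blast
        ultimately have "(k', m) \<in> lx" using L k' e by (auto simp: lowc_def)
        then show False using e(3) lx_asym by blast
      qed
    qed
  qed
qed

lemma gr_nonzero_iff: "gr_nonzero F G e = (\<exists>k\<in>CC. e k \<noteq> 0)"
  by (simp add: gr_nonzero_def carrier_DirProd)
lemma gr_pos_iff: "gr_pos F G LF LG e = (\<exists>m\<in>CC. 0 < e m \<and> (\<forall>y\<in>CC. e y \<noteq> 0 \<and> y \<noteq> m \<longrightarrow> (y, m) \<in> lx))"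
  by (simp add: gr_pos_def carrier_DirProd)
lemma gr_pos_nz: "gr_pos F G LF LG e \<Longrightarrow> gr_nonzero F G e"
proof -
  assume "gr_pos F G LF LG e"
  then obtain m where "m \<in> CC" "0 < e m" unfolding gr_pos_iff by blast
  then show ?thesis unfolding gr_nonzero_iff by (intro bexI[of _ m]) auto
qed

lemma gr_pos_nz': "\<not> gr_nonzero F G e \<Longrightarrow> gr_pos F G LF LG e = False"
  using gr_pos_nz by blast

lemma filt_iff: "(case filter (\<lambda>(i, j). gr_nonzero F G (M i j n)) positions of
       (i, j) # _ \<Rightarrow> gr_pos F G LF LG (M i j n) | [] \<Rightarrow> False)
   = (\<exists>q<4. (\<forall>q'<q. \<not> gr_nonzero F G (ent M q' n)) \<and> gr_pos F G LF LG (ent M q n))"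
  unfolding ex_less4 ent_simps all_less3 all_less2 all_less1
  by (cases "gr_nonzero F G (M 0 0 n)"; cases "gr_nonzero F G (M 1 1 n)";
      cases "gr_nonzero F G (M 0 1 n)"; cases "gr_nonzero F G (M 1 0 n)")
     (simp_all add: positions_def gr_pos_nz')

lemma lowpart_iff: "(\<forall>m<n. \<forall>(i, j)\<in>set positions. \<not> gr_nonzero F G (M i j m)) =
    (\<forall>n'<n. \<forall>q'<4. \<not> gr_nonzero F G (ent M q' n'))"
  unfolding all_less4 ent_simps by (simp add: positions_def)

lemma pmat_pos_iff1: "pmat_pos F G LF LG M = (\<exists>n q. q < 4 \<and> (\<forall>n'<n. \<forall>q'<4. \<not> gr_nonzero F G (ent M q' n')) \<and>
    (\<forall>q'<q. \<not> gr_nonzero F G (ent M q' n)) \<and> gr_pos F G LF LG (ent M q n))"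
proof -
  have A: "(\<exists>(i, j)\<in>set positions. gr_nonzero F G (M i j n))" if "gr_pos F G LF LG (ent M q n)" "q < 4" for n q
  proof -
    have nz: "gr_nonzero F G (ent M q n)" using that gr_pos_nz by blast
    have "q = 0 \<or> q = 1 \<or> q = 2 \<or> q = 3" using that(2) by auto
    then show ?thesis
    proof (elim disjE)
      assume "q = 0" then show ?thesis using nz by (simp add: ent_simps positions_def)
    next
      assume "q = 1" then show ?thesis using nz by (simp add: ent_simps positions_def)
    next
      assume "q = 2" then show ?thesis using nz by (simp add: ent_simps positions_def)
    next
      assume "q = 3" then show ?thesis using nz by (simp add: ent_simps positions_def)
    qed
  qed
  show ?thesis
    unfolding pmat_pos_def filt_iff lowpart_iff
  proof
    assume "\<exists>n. (\<exists>(i, j)\<in>set positions. gr_nonzero F G (M i j n)) \<and>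
        (\<forall>n'<n. \<forall>q'<4. \<not> gr_nonzero F G (ent M q' n')) \<and>
        (\<exists>q<4. (\<forall>q'<q. \<not> gr_nonzero F G (ent M q' n)) \<and> gr_pos F G LF LG (ent M q n))"
    then obtain n q where "(\<forall>n'<n. \<forall>q'<4. \<not> gr_nonzero F G (ent M q' n'))" "q < 4"
        "(\<forall>q'<q. \<not> gr_nonzero F G (ent M q' n))" "gr_pos F G LF LG (ent M q n)" by blast
    then show "\<exists>n q. q < 4 \<and> (\<forall>n'<n. \<forall>q'<4. \<not> gr_nonzero F G (ent M q' n')) \<and>
        (\<forall>q'<q. \<not> gr_nonzero F G (ent M q' n)) \<and> gr_pos F G LF LG (ent M q n)" by blast
  next
    assume "\<exists>n q. q < 4 \<and> (\<forall>n'<n. \<forall>q'<4. \<not> gr_nonzero F G (ent M q' n')) \<and>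
        (\<forall>q'<q. \<not> gr_nonzero F G (ent M q' n)) \<and> gr_pos F G LF LG (ent M q n)"
    then obtain n q where B: "(\<forall>n'<n. \<forall>q'<4. \<not> gr_nonzero F G (ent M q' n'))" "q < 4"
        "(\<forall>q'<q. \<not> gr_nonzero F G (ent M q' n))" "gr_pos F G LF LG (ent M q n)" by blast
    have "(\<exists>(i, j)\<in>set positions. gr_nonzero F G (M i j n))" using A[OF B(4) B(2)] .
    then show "\<exists>n. (\<exists>(i, j)\<in>set positions. gr_nonzero F G (M i j n)) \<and>
        (\<forall>n'<n. \<forall>q'<4. \<not> gr_nonzero F G (ent M q' n')) \<and>
        (\<exists>q<4. (\<forall>q'<q. \<not> gr_nonzero F G (ent M q' n)) \<and> gr_pos F G LF LG (ent M q n))"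
      using B by blast
  qed
qed

lemma pmat_pos_Pos: "pmat_pos F G LF LG M = Pos M"
  unfolding pmat_pos_iff1 Pos_iff lowc_def gr_pos_iff gr_nonzero_iff by blast


lemma ent_add: "ent (\<lambda>i j n x. M i j n x + N i j n x) q n k = ent M q n k + ent N q n k"
  by (simp add: ent_def)
lemma ent_neg: "ent (\<lambda>i j n x. - M i j n x) q n k = - ent M q n k"
  by (simp add: ent_def)

lemma Pos_add: assumes "Pos M" "Pos N" shows "Pos (\<lambda>i j n x. M i j n x + N i j n x)"
proof -
  obtain n1 q1 k1 where A: "q1 < 4" "k1 \<in> CC" "0 < ent M q1 n1 k1"
    "\<And>n' q' k'. q' < 4 \<Longrightarrow> k' \<in> CC \<Longrightarrow> idxl n' q' k' n1 q1 k1 \<Longrightarrow> ent M q' n' k' = 0"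
    using assms(1) unfolding Pos_def by blast
  obtain n2 q2 k2 where B: "q2 < 4" "k2 \<in> CC" "0 < ent N q2 n2 k2"
    "\<And>n' q' k'. q' < 4 \<Longrightarrow> k' \<in> CC \<Longrightarrow> idxl n' q' k' n2 q2 k2 \<Longrightarrow> ent N q' n' k' = 0"
    using assms(2) unfolding Pos_def by blast
  consider (eq) "(n1, q1, k1) = (n2, q2, k2)" | (lt) "idxl n1 q1 k1 n2 q2 k2" | (gt) "idxl n2 q2 k2 n1 q1 k1"
    using idxl_total[OF A(2) B(2)] by blast
  then show ?thesis
  proof cases
    case eq
    then have e: "n2 = n1" "q2 = q1" "k2 = k1" by auto
    show ?thesis unfolding Pos_def ent_add using A B(1-3) B(4)[unfolded e]
      by (intro exI[of _ n1] exI[of _ q1] exI[of _ k1]) (simp add: e)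
  next
    case lt
    have "ent N q1 n1 k1 = 0" using B(4)[OF A(1) A(2) lt] .
    have "\<forall>n' q' k'. q' < 4 \<longrightarrow> k' \<in> CC \<longrightarrow> idxl n' q' k' n1 q1 k1 \<longrightarrow> ent M q' n' k' + ent N q' n' k' = 0"
    proof (intro allI impI)
      fix n' q' k' assume "q' < 4" "k' \<in> CC" "idxl n' q' k' n1 q1 k1"
      moreover then have "idxl n' q' k' n2 q2 k2" using lt idxl_trans by blast
      ultimately show "ent M q' n' k' + ent N q' n' k' = 0" using A(4) B(4) by simp
    qed
    then show ?thesis unfolding Pos_def ent_add using A \<open>ent N q1 n1 k1 = 0\<close>
      by (intro exI[of _ n1] exI[of _ q1] exI[of _ k1]) simp
  next
    case gt
    have "ent M q2 n2 k2 = 0" using A(4)[OF B(1) B(2) gt] .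
    have "\<forall>n' q' k'. q' < 4 \<longrightarrow> k' \<in> CC \<longrightarrow> idxl n' q' k' n2 q2 k2 \<longrightarrow> ent M q' n' k' + ent N q' n' k' = 0"
    proof (intro allI impI)
      fix n' q' k' assume "q' < 4" "k' \<in> CC" "idxl n' q' k' n2 q2 k2"
      moreover then have "idxl n' q' k' n1 q1 k1" using gt idxl_trans by blast
      ultimately show "ent M q' n' k' + ent N q' n' k' = 0" using A(4) B(4) by simp
    qed
    then show ?thesis unfolding Pos_def ent_add using B \<open>ent M q2 n2 k2 = 0\<close>
      by (intro exI[of _ n2] exI[of _ q2] exI[of _ k2]) simp
  qed
qed

lemma Pos_zero: "\<not> Pos (\<lambda>i j n x. 0)"
  unfolding Pos_def by (simp add: ent_def)

lemma Pos_total: assumes fin: "\<And>q n. q < 4 \<Longrightarrow> finsupp (ent M q n)"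
  and nz: "\<exists>q<4. \<exists>n. \<exists>k\<in>CC. ent M q n k \<noteq> 0"
  shows "Pos M \<or> Pos (\<lambda>i j n x. - M i j n x)"
proof -
  define P where "P n \<longleftrightarrow> (\<exists>q<4. \<exists>k\<in>CC. ent M q n k \<noteq> 0)" for n
  have "\<exists>n. P n" using nz unfolding P_def by blast
  define n0 where "n0 = (LEAST n. P n)"
  have Pn0: "P n0" unfolding n0_def using \<open>\<exists>n. P n\<close> by (metis LeastI_ex)
  have below: "\<not> P n'" if "n' < n0" for n' using not_less_Least[of n' P] that unfolding n0_def by blast
  define Q where "Q q \<longleftrightarrow> q < 4 \<and> (\<exists>k\<in>CC. ent M q n0 k \<noteq> 0)" for q
  have "\<exists>q. Q q" using Pn0 unfolding P_def Q_def by blast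
  define q0 where "q0 = (LEAST q. Q q)"
  have Qq0: "Q q0" unfolding q0_def using \<open>\<exists>q. Q q\<close> by (metis LeastI_ex)
  have belowq: "\<not> Q q'" if "q' < q0" for q' using not_less_Least[of q' Q] that unfolding q0_def by blast
  define S where "S = {k \<in> CC. ent M q0 n0 k \<noteq> 0}"
  have q04: "q0 < 4" using Qq0 Q_def by blast
  have "finite S" using fin[OF q04, of n0] unfolding S_def finsupp_def by (rule rev_finite_subset) auto
  moreover have "S \<noteq> {}" using Qq0 unfolding Q_def S_def by blast
  moreover have "S \<subseteq> CC" unfolding S_def by blast
  ultimately obtain m where m: "m \<in> S" "\<forall>y\<in>S. y \<noteq> m \<longrightarrow> (y, m) \<in> lx" using lx_max by blast
  have low1: "\<forall>n'<n0. \<forall>q'<4. \<forall>k\<in>CC. ent M q' n' k = 0" using below unfolding P_def by blast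
  have low2: "\<forall>q'<q0. \<forall>k\<in>CC. ent M q' n0 k = 0" using belowq q04 unfolding Q_def by auto
  have low3: "\<forall>k\<in>CC. ent M q0 n0 k \<noteq> 0 \<longrightarrow> k \<noteq> m \<longrightarrow> (k, m) \<in> lx" using m unfolding S_def by blast
  have mC: "m \<in> CC" "ent M q0 n0 m \<noteq> 0" using m unfolding S_def by auto
  show ?thesis
  proof (cases "0 < ent M q0 n0 m")
    case True
    then have "lowc M n0 q0 m" unfolding lowc_def using q04 mC low1 low2 low3 by blast
    then show ?thesis unfolding Pos_iff by blast
  next
    case False
    then have "lowc (\<lambda>i j n x. - M i j n x) n0 q0 m" unfolding lowc_def ent_neg using q04 mC low1 low2 low3 by auto
    then show ?thesis unfolding Pos_iff by blast
  qed
qed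

lemma Pos_shift:
  fixes \<tau> \<sigma> :: "nat \<Rightarrow> 'a \<times> 'b \<Rightarrow> 'a \<times> 'b"
  assumes t1: "\<And>q k. q < 4 \<Longrightarrow> k \<in> CC \<Longrightarrow> \<tau> q k \<in> CC"
    and t2: "\<And>q m. q < 4 \<Longrightarrow> m \<in> CC \<Longrightarrow> \<sigma> q m \<in> CC \<and> \<tau> q (\<sigma> q m) = m"
    and t3: "\<And>q a b. q < 4 \<Longrightarrow> a \<in> CC \<Longrightarrow> b \<in> CC \<Longrightarrow> (a, b) \<in> lx \<Longrightarrow> (\<tau> q a, \<tau> q b) \<in> lx"
    and h: "\<And>n. \<forall>n'<n. \<forall>q<4. \<forall>k\<in>CC. ent M q n' k = 0 \<Longrightarrow>
       (\<forall>n'<n. \<forall>q<4. \<forall>k\<in>CC. ent N q n' k = 0) \<and> (\<forall>q<4. \<forall>k\<in>CC. ent N q n k = ent M q n (\<tau> q k))"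
    and P: "Pos M"
  shows "Pos N"
proof -
  obtain n q m where L: "lowc M n q m" using P unfolding Pos_iff by blast
  have q: "q < 4" and mC: "m \<in> CC" and pos: "0 < ent M q n m"
    and l1: "\<forall>n'<n. \<forall>q'<4. \<forall>k\<in>CC. ent M q' n' k = 0"
    and l2: "\<forall>q'<q. \<forall>k\<in>CC. ent M q' n k = 0"
    and l3: "\<forall>k\<in>CC. ent M q n k \<noteq> 0 \<longrightarrow> k \<noteq> m \<longrightarrow> (k, m) \<in> lx"
    using L unfolding lowc_def by blast+
  note hh = h[OF l1]
  define m' where "m' = \<sigma> q m"
  have m': "m' \<in> CC" "\<tau> q m' = m" using t2[OF q mC] m'_def by auto
  have "lowc N n q m'" unfolding lowc_def
  proof (intro conjI ballI allI impI)
    show "q < 4" "m' \<in> CC" by (fact q) (fact m'(1))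
    show "0 < ent N q n m'" using hh q m' pos by auto
    show "\<And>n' q' k. n' < n \<Longrightarrow> q' < 4 \<Longrightarrow> k \<in> CC \<Longrightarrow> ent N q' n' k = 0" using hh by blast
    fix q' k assume "q' < q" "k \<in> CC"
    then show "ent N q' n k = 0" using hh l2 t1 q by auto
  next
    fix k assume k: "k \<in> CC" "ent N q n k \<noteq> 0" "k \<noteq> m'"
    have e: "ent M q n (\<tau> q k) \<noteq> 0" using hh q k by auto
    have "(k, m') \<in> lx \<or> (m', k) \<in> lx" using lx_total[OF k(1) m'(1) k(3)] .
    then show "(k, m') \<in> lx"
    proof
      assume "(m', k) \<in> lx"
      then have "(m, \<tau> q k) \<in> lx" using t3[OF q m'(1) k(1)] m'(2) by simp
      moreover have "\<tau> q k \<noteq> m \<Longrightarrow> (\<tau> q k, m) \<in> lx" using l3 e t1[OF q k(1)] by blast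
      ultimately show ?thesis using lx_asym lx_irrefl by blast
    qed
  qed
  then show ?thesis unfolding Pos_iff by blast
qed


fun hl :: "'a + 'b \<Rightarrow> nat \<Rightarrow> 'a \<times> 'b" where
  "hl (Inl f) q = (if q = 0 \<or> q = 2 then (f, \<one>\<^bsub>G\<^esub>) else (\<one>\<^bsub>F\<^esub>, \<one>\<^bsub>G\<^esub>))"
| "hl (Inr g) q = (if q = 1 \<or> q = 3 then (\<one>\<^bsub>F\<^esub>, g) else (\<one>\<^bsub>F\<^esub>, \<one>\<^bsub>G\<^esub>))"
fun hr :: "'a + 'b \<Rightarrow> nat \<Rightarrow> 'a \<times> 'b" where
  "hr (Inl f) q = (if q = 0 \<or> q = 3 then (f, \<one>\<^bsub>G\<^esub>) else (\<one>\<^bsub>F\<^esub>, \<one>\<^bsub>G\<^esub>))"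
| "hr (Inr g) q = (if q = 1 \<or> q = 2 then (\<one>\<^bsub>F\<^esub>, g) else (\<one>\<^bsub>F\<^esub>, \<one>\<^bsub>G\<^esub>))"

lemma hl_in: "lc F G l \<Longrightarrow> hl l q \<in> CC" by (cases l) auto
lemma hr_in: "lc F G l \<Longrightarrow> hr l q \<in> CC" by (cases l) auto

lemma zero_entries: assumes "\<forall>n'<n. \<forall>q<4. \<forall>k\<in>CC. ent M q n' k = 0"
  shows "\<And>i j n' k. i < 2 \<Longrightarrow> j < 2 \<Longrightarrow> n' < n \<Longrightarrow> k \<in> CC \<Longrightarrow> M i j n' k = 0"
proof -
  fix i j n' :: nat and k assume "i < 2" "j < 2" "n' < n" "k \<in> CC"
  moreover have "M 0 0 n' k = 0 \<and> M 1 1 n' k = 0 \<and> M 0 1 n' k = 0 \<and> M 1 0 n' k = 0"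
    using assms \<open>n' < n\<close> \<open>k \<in> CC\<close> unfolding all_less4 ent_simps by blast
  ultimately show "M i j n' k = 0" by (auto simp: less_2_cases_iff)
qed

lemma lop_shape: assumes l: "lc F G l" and z0: "\<forall>n'<n. \<forall>q<4. \<forall>k\<in>CC. ent M q n' k = 0"
  shows "(\<forall>n'<n. \<forall>q<4. \<forall>k\<in>CC. ent (lop F G l M) q n' k = 0) \<and>
         (\<forall>q<4. \<forall>k\<in>CC. ent (lop F G l M) q n k = ent M q n (inv\<^bsub>F\<times>\<times>G\<^esub> (hl l q) \<otimes>\<^bsub>F\<times>\<times>G\<^esub> k))"
proof -
  note z = zero_entries[OF z0]
  show ?thesis
  proof (cases l)
    case (Inl f)
    then have f: "f \<in> carrier F" using l by simp
    show ?thesis unfolding all_less4 ent_simps using f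
      by (simp add: Inl lsh_def z)
  next
    case (Inr g)
    then have g: "g \<in> carrier G" using l by simp
    show ?thesis unfolding all_less4 ent_simps using g
      by (simp add: Inr lsh_def z)
  qed
qed

lemma rop_shape: assumes l: "lc F G l" and z0: "\<forall>n'<n. \<forall>q<4. \<forall>k\<in>CC. ent M q n' k = 0"
  shows "(\<forall>n'<n. \<forall>q<4. \<forall>k\<in>CC. ent (rop F G l M) q n' k = 0) \<and>
         (\<forall>q<4. \<forall>k\<in>CC. ent (rop F G l M) q n k = ent M q n (k \<otimes>\<^bsub>F\<times>\<times>G\<^esub> inv\<^bsub>F\<times>\<times>G\<^esub> (hr l q)))"
proof -
  note z = zero_entries[OF z0]
  show ?thesis
  proof (cases l)
    case (Inl f)
    then have f: "f \<in> carrier F" using l by simp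
    show ?thesis unfolding all_less4 ent_simps using f
      by (simp add: Inl rsh_def z)
  next
    case (Inr g)
    then have g: "g \<in> carrier G" using l by simp
    show ?thesis unfolding all_less4 ent_simps using g
      by (simp add: Inr rsh_def z)
  qed
qed

lemma Pos_lop: assumes l: "lc F G l" and P: "Pos M" shows "Pos (lop F G l M)"
proof (rule Pos_shift[where \<tau> = "\<lambda>q k. inv\<^bsub>F\<times>\<times>G\<^esub> (hl l q) \<otimes>\<^bsub>F\<times>\<times>G\<^esub> k" and \<sigma> = "\<lambda>q m. hl l q \<otimes>\<^bsub>F\<times>\<times>G\<^esub> m"])
  show "\<And>q k. q < 4 \<Longrightarrow> k \<in> CC \<Longrightarrow> inv\<^bsub>F\<times>\<times>G\<^esub> (hl l q) \<otimes>\<^bsub>F\<times>\<times>G\<^esub> k \<in> CC"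
    using hl_in[OF l] by simp
  show "\<And>q m. q < 4 \<Longrightarrow> m \<in> CC \<Longrightarrow> hl l q \<otimes>\<^bsub>F\<times>\<times>G\<^esub> m \<in> CC \<and>
      inv\<^bsub>F\<times>\<times>G\<^esub> (hl l q) \<otimes>\<^bsub>F\<times>\<times>G\<^esub> (hl l q \<otimes>\<^bsub>F\<times>\<times>G\<^esub> m) = m"
    using hl_in[OF l] K.inv_cancel_l by simp
  show "\<And>q a b. q < 4 \<Longrightarrow> a \<in> CC \<Longrightarrow> b \<in> CC \<Longrightarrow> (a, b) \<in> lx \<Longrightarrow>
      (inv\<^bsub>F\<times>\<times>G\<^esub> (hl l q) \<otimes>\<^bsub>F\<times>\<times>G\<^esub> a, inv\<^bsub>F\<times>\<times>G\<^esub> (hl l q) \<otimes>\<^bsub>F\<times>\<times>G\<^esub> b) \<in> lx"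
    using hl_in[OF l] by (intro lx_left) auto
  show "\<And>n. \<forall>n'<n. \<forall>q<4. \<forall>k\<in>CC. ent M q n' k = 0 \<Longrightarrow>
       (\<forall>n'<n. \<forall>q<4. \<forall>k\<in>CC. ent (lop F G l M) q n' k = 0) \<and>
       (\<forall>q<4. \<forall>k\<in>CC. ent (lop F G l M) q n k = ent M q n (inv\<^bsub>F\<times>\<times>G\<^esub> (hl l q) \<otimes>\<^bsub>F\<times>\<times>G\<^esub> k))"
    by (rule lop_shape[OF l])
qed (fact P)

lemma Pos_rop: assumes l: "lc F G l" and P: "Pos M" shows "Pos (rop F G l M)"
proof (rule Pos_shift[where \<tau> = "\<lambda>q k. k \<otimes>\<^bsub>F\<times>\<times>G\<^esub> inv\<^bsub>F\<times>\<times>G\<^esub> (hr l q)" and \<sigma> = "\<lambda>q m. m \<otimes>\<^bsub>F\<times>\<times>G\<^esub> hr l q"])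
  show "\<And>q k. q < 4 \<Longrightarrow> k \<in> CC \<Longrightarrow> k \<otimes>\<^bsub>F\<times>\<times>G\<^esub> inv\<^bsub>F\<times>\<times>G\<^esub> (hr l q) \<in> CC"
    using hr_in[OF l] by simp
  show "\<And>q m. q < 4 \<Longrightarrow> m \<in> CC \<Longrightarrow> m \<otimes>\<^bsub>F\<times>\<times>G\<^esub> hr l q \<in> CC \<and>
      (m \<otimes>\<^bsub>F\<times>\<times>G\<^esub> hr l q) \<otimes>\<^bsub>F\<times>\<times>G\<^esub> inv\<^bsub>F\<times>\<times>G\<^esub> (hr l q) = m"
    using hr_in[OF l] K.inv_cancel_r by simp
  show "\<And>q a b. q < 4 \<Longrightarrow> a \<in> CC \<Longrightarrow> b \<in> CC \<Longrightarrow> (a, b) \<in> lx \<Longrightarrow>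
      (a \<otimes>\<^bsub>F\<times>\<times>G\<^esub> inv\<^bsub>F\<times>\<times>G\<^esub> (hr l q), b \<otimes>\<^bsub>F\<times>\<times>G\<^esub> inv\<^bsub>F\<times>\<times>G\<^esub> (hr l q)) \<in> lx"
    using hr_in[OF l] by (intro lx_right) auto
  show "\<And>n. \<forall>n'<n. \<forall>q<4. \<forall>k\<in>CC. ent M q n' k = 0 \<Longrightarrow>
       (\<forall>n'<n. \<forall>q<4. \<forall>k\<in>CC. ent (rop F G l M) q n' k = 0) \<and>
       (\<forall>q<4. \<forall>k\<in>CC. ent (rop F G l M) q n k = ent M q n (k \<otimes>\<^bsub>F\<times>\<times>G\<^esub> inv\<^bsub>F\<times>\<times>G\<^esub> (hr l q)))"
    by (rule rop_shape[OF l])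
qed (fact P)

lemma Pos_Lw: "lcw x \<Longrightarrow> Pos M \<Longrightarrow> Pos (Lw x M)"
  by (induction x) (auto intro: Pos_lop)
lemma Pos_Rw: "lcw x \<Longrightarrow> Pos M \<Longrightarrow> Pos (Rw x M)"
  by (induction x arbitrary: M) (auto intro: Pos_rop)


lemma one_K_l: "x \<in> CC \<Longrightarrow> (\<one>\<^bsub>F\<^esub>, \<one>\<^bsub>G\<^esub>) \<otimes>\<^bsub>F\<times>\<times>G\<^esub> x = x"
  using K.l_one[of x] by simp
lemma inv_one_K: "inv\<^bsub>F\<times>\<times>G\<^esub> (\<one>\<^bsub>F\<^esub>, \<one>\<^bsub>G\<^esub>) = (\<one>\<^bsub>F\<^esub>, \<one>\<^bsub>G\<^esub>)"
  using K.inv_one by simp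

lemma KL: assumes h: "h \<in> CC" "h \<noteq> (\<one>\<^bsub>F\<^esub>, \<one>\<^bsub>G\<^esub>)" and fs: "finsupp e"
  and wf: "\<And>x. x \<notin> CC \<Longrightarrow> e x = 0" and nz: "\<exists>x. e x \<noteq> 0"
  shows "\<exists>x. lsh (F\<times>\<times>G) h e x \<noteq> lsh (F\<times>\<times>G) (\<one>\<^bsub>F\<^esub>, \<one>\<^bsub>G\<^esub>) e x"
proof (rule ccontr)
  assume na: "\<not> ?thesis"
  have eq: "e (inv\<^bsub>F\<times>\<times>G\<^esub> h \<otimes>\<^bsub>F\<times>\<times>G\<^esub> x) = e x" if x: "x \<in> CC" for x
  proof -
    have "lsh (F\<times>\<times>G) h e x = lsh (F\<times>\<times>G) (\<one>\<^bsub>F\<^esub>, \<one>\<^bsub>G\<^esub>) e x" using na by blast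
    then show ?thesis using x unfolding lsh_def inv_one_K by (simp add: one_K_l)
  qed
  define S where "S = {x. e x \<noteq> 0}"
  have "finite S" using fs unfolding finsupp_def S_def .
  moreover have "S \<noteq> {}" using nz unfolding S_def by auto
  moreover have SC: "S \<subseteq> CC" using wf unfolding S_def by auto
  ultimately obtain m where m: "m \<in> S" "\<forall>y\<in>S. y \<noteq> m \<longrightarrow> (y, m) \<in> lx" using lx_max by blast
  have mC: "m \<in> CC" using m SC by auto
  have hmC: "h \<otimes>\<^bsub>F\<times>\<times>G\<^esub> m \<in> CC" using h mC by simp
  have ihmC: "inv\<^bsub>F\<times>\<times>G\<^esub> h \<otimes>\<^bsub>F\<times>\<times>G\<^esub> m \<in> CC" using h mC by simp
  have "e (h \<otimes>\<^bsub>F\<times>\<times>G\<^esub> m) = e m"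
    using eq[OF hmC] K.inv_cancel_l[OF h(1) mC] by simp
  then have "h \<otimes>\<^bsub>F\<times>\<times>G\<^esub> m \<in> S" using m(1) unfolding S_def by simp
  moreover have "h \<otimes>\<^bsub>F\<times>\<times>G\<^esub> m \<noteq> m"
  proof
    assume "h \<otimes>\<^bsub>F\<times>\<times>G\<^esub> m = m"
    then have "h = \<one>\<^bsub>F\<times>\<times>G\<^esub>" using h(1) mC K.r_cancel_one by blast
    then show False using h(2) by simp
  qed
  ultimately have A: "(h \<otimes>\<^bsub>F\<times>\<times>G\<^esub> m, m) \<in> lx" using m(2) by blast
  have "inv\<^bsub>F\<times>\<times>G\<^esub> h \<otimes>\<^bsub>F\<times>\<times>G\<^esub> m \<in> S" using eq[OF mC] m(1) unfolding S_def by simp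
  moreover have "inv\<^bsub>F\<times>\<times>G\<^esub> h \<otimes>\<^bsub>F\<times>\<times>G\<^esub> m \<noteq> m"
  proof
    assume "inv\<^bsub>F\<times>\<times>G\<^esub> h \<otimes>\<^bsub>F\<times>\<times>G\<^esub> m = m"
    then have "h \<otimes>\<^bsub>F\<times>\<times>G\<^esub> (inv\<^bsub>F\<times>\<times>G\<^esub> h \<otimes>\<^bsub>F\<times>\<times>G\<^esub> m) = h \<otimes>\<^bsub>F\<times>\<times>G\<^esub> m" by simp
    then have "m = h \<otimes>\<^bsub>F\<times>\<times>G\<^esub> m" using K.inv_cancel_l'[OF h(1) mC] by simp
    then show False using \<open>h \<otimes>\<^bsub>F\<times>\<times>G\<^esub> m \<noteq> m\<close> by simp
  qed
  ultimately have "(inv\<^bsub>F\<times>\<times>G\<^esub> h \<otimes>\<^bsub>F\<times>\<times>G\<^esub> m, m) \<in> lx" using m(2) by blast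
  from lx_left[OF h(1) ihmC mC this] have "(m, h \<otimes>\<^bsub>F\<times>\<times>G\<^esub> m) \<in> lx"
    using K.inv_cancel_l'[OF h(1) mC] by simp
  then show False using A lx_asym by blast
qed


definition degP :: "('a + 'b) list \<Rightarrow> bool" where
  "degP w \<longleftrightarrow> (\<forall>n i j x. length w < n \<longrightarrow> rhoP w i j n x = 0) \<and>
    ((w = [] \<or> isl (hd w)) \<longrightarrow> (\<exists>j x. rhoP w 0 j (length w) x \<noteq> 0)) \<and>
    ((w = [] \<or> \<not> isl (hd w)) \<longrightarrow> (\<exists>j x. rhoP w 1 j (length w) x \<noteq> 0)) \<and>
    ((w \<noteq> [] \<and> isl (hd w)) \<longrightarrow> (\<forall>j x. rhoP w 1 j (length w) x = 0)) \<and>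
    ((w \<noteq> [] \<and> \<not> isl (hd w)) \<longrightarrow> (\<forall>j x. rhoP w 0 j (length w) x = 0))"

lemma good_wf: "good M \<Longrightarrow> x \<notin> CC \<Longrightarrow> M i j n x = 0"
  unfolding good_def by blast
lemma good_fs: "good M \<Longrightarrow> finsupp (M i j n)"
  unfolding good_def by blast

lemma deg: "fp_reduced F G w \<Longrightarrow> degP w"
proof (induction w)
  case Nil
  have "rhoP [] 0 0 0 (\<one>\<^bsub>F\<^esub>, \<one>\<^bsub>G\<^esub>) \<noteq> 0" "rhoP [] 1 1 0 (\<one>\<^bsub>F\<^esub>, \<one>\<^bsub>G\<^esub>) \<noteq> 0"
    by (simp_all add: rhoP_def Ione_def gr_delta_def)
  then show ?case unfolding degP_def by (auto simp: rhoP_def Ione_def)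
next
  case (Cons l w')
  have w': "fp_reduced F G w'" "fp_valid F G l" "w' = [] \<or> isl l \<noteq> isl (hd w')"
    using Cons.prems by (auto simp: fp_reduced_cons)
  have D: "degP w'" using Cons.IH w'(1) .
  define M where "M = rhoP w'"
  define k where "k = length w'"
  have gM: "good M" unfolding M_def by (rule good_rhoP[OF reduced_lcw[OF w'(1)]])
  have Z: "\<And>n i j x. k < n \<Longrightarrow> M i j n x = 0" using D unfolding degP_def M_def k_def by blast
  have R: "rhoP (l # w') = lop F G l M" by (simp add: rhoP_def M_def del: lop.simps)
  show ?case
  proof (cases l)
    case (Inl f)
    have f: "f \<in> carrier F" "f \<noteq> \<one>\<^bsub>F\<^esub>" using w'(2) Inl by auto
    have "w' = [] \<or> \<not> isl (hd w')" using w'(3) Inl by auto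
    then obtain j x0 where x0: "M 1 j k x0 \<noteq> 0" using D unfolding degP_def M_def k_def by blast
    have "\<exists>x. lsh (F\<times>\<times>G) (f, \<one>\<^bsub>G\<^esub>) (M 1 j k) x \<noteq> lsh (F\<times>\<times>G) (\<one>\<^bsub>F\<^esub>, \<one>\<^bsub>G\<^esub>) (M 1 j k) x"
    proof (rule KL)
      show "(f, \<one>\<^bsub>G\<^esub>) \<in> CC" "(f, \<one>\<^bsub>G\<^esub>) \<noteq> (\<one>\<^bsub>F\<^esub>, \<one>\<^bsub>G\<^esub>)" using f by auto
      show "finsupp (M 1 j k)" by (rule good_fs[OF gM])
      show "\<And>x. x \<notin> CC \<Longrightarrow> M 1 j k x = 0" by (rule good_wf[OF gM])
      show "\<exists>x. M 1 j k x \<noteq> 0" using x0 by blast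
    qed
    then obtain x where x: "lsh (F\<times>\<times>G) (f, \<one>\<^bsub>G\<^esub>) (M 1 j k) x \<noteq> lsh (F\<times>\<times>G) (\<one>\<^bsub>F\<^esub>, \<one>\<^bsub>G\<^esub>) (M 1 j k) x" by blast
    have a: "\<forall>n i j x. length (l # w') < n \<longrightarrow> rhoP (l # w') i j n x = 0"
      unfolding R by (auto simp: Inl k_def[symmetric] lsh_def Z)
    have b0: "lsh (F\<times>\<times>G) (f, \<one>\<^bsub>G\<^esub>) (M 0 j (Suc k)) x = 0" by (simp add: lsh_def Z)
    have "rhoP (l # w') 0 j (length (l # w')) x = lsh (F\<times>\<times>G) (f, \<one>\<^bsub>G\<^esub>) (M 0 j (Suc k)) x +
        (lsh (F\<times>\<times>G) (f, \<one>\<^bsub>G\<^esub>) (M 1 j k) x - lsh (F\<times>\<times>G) (\<one>\<^bsub>F\<^esub>, \<one>\<^bsub>G\<^esub>) (M 1 j k) x)"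
      unfolding R by (simp add: Inl k_def[symmetric])
    then have b: "rhoP (l # w') 0 j (length (l # w')) x \<noteq> 0" using b0 x by simp
    have c: "\<forall>j x. rhoP (l # w') 1 j (length (l # w')) x = 0"
      unfolding R by (simp add: Inl k_def[symmetric] lsh_def Z)
    have b': "\<exists>j x. rhoP (l # w') 0 j (length (l # w')) x \<noteq> 0" using b by blast
    have hd: "isl (hd (l # w'))" "l # w' \<noteq> []" by (simp_all add: Inl)
    show ?thesis unfolding degP_def using a b' c hd by blast
  next
    case (Inr g)
    have g: "g \<in> carrier G" "g \<noteq> \<one>\<^bsub>G\<^esub>" using w'(2) Inr by auto
    have "w' = [] \<or> isl (hd w')" using w'(3) Inr by auto
    then obtain j x0 where x0: "M 0 j k x0 \<noteq> 0" using D unfolding degP_def M_def k_def by blast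
    have "\<exists>x. lsh (F\<times>\<times>G) (\<one>\<^bsub>F\<^esub>, g) (M 0 j k) x \<noteq> lsh (F\<times>\<times>G) (\<one>\<^bsub>F\<^esub>, \<one>\<^bsub>G\<^esub>) (M 0 j k) x"
    proof (rule KL)
      show "(\<one>\<^bsub>F\<^esub>, g) \<in> CC" "(\<one>\<^bsub>F\<^esub>, g) \<noteq> (\<one>\<^bsub>F\<^esub>, \<one>\<^bsub>G\<^esub>)" using g by auto
      show "finsupp (M 0 j k)" by (rule good_fs[OF gM])
      show "\<And>x. x \<notin> CC \<Longrightarrow> M 0 j k x = 0" by (rule good_wf[OF gM])
      show "\<exists>x. M 0 j k x \<noteq> 0" using x0 by blast
    qed
    then obtain x where x: "lsh (F\<times>\<times>G) (\<one>\<^bsub>F\<^esub>, g) (M 0 j k) x \<noteq> lsh (F\<times>\<times>G) (\<one>\<^bsub>F\<^esub>, \<one>\<^bsub>G\<^esub>) (M 0 j k) x" by blast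
    have a: "\<forall>n i j x. length (l # w') < n \<longrightarrow> rhoP (l # w') i j n x = 0"
      unfolding R by (auto simp: Inr k_def[symmetric] lsh_def Z)
    have b0: "lsh (F\<times>\<times>G) (\<one>\<^bsub>F\<^esub>, g) (M 1 j (Suc k)) x = 0" by (simp add: lsh_def Z)
    have "rhoP (l # w') 1 j (length (l # w')) x = lsh (F\<times>\<times>G) (\<one>\<^bsub>F\<^esub>, g) (M 1 j (Suc k)) x +
        (lsh (F\<times>\<times>G) (\<one>\<^bsub>F\<^esub>, g) (M 0 j k) x - lsh (F\<times>\<times>G) (\<one>\<^bsub>F\<^esub>, \<one>\<^bsub>G\<^esub>) (M 0 j k) x)"
      unfolding R by (simp add: Inr k_def[symmetric])
    then have b: "rhoP (l # w') 1 j (length (l # w')) x \<noteq> 0" using b0 x by simp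
    have c: "\<forall>j x. rhoP (l # w') 0 j (length (l # w')) x = 0"
      unfolding R by (simp add: Inr k_def[symmetric] lsh_def Z)
    have b': "\<exists>j x. rhoP (l # w') 1 j (length (l # w')) x \<noteq> 0" using b by blast
    have hd: "\<not> isl (hd (l # w'))" "l # w' \<noteq> []" by (simp_all add: Inr)
    show ?thesis unfolding degP_def using a b' c hd by blast
  qed
qed


fun linv :: "'a + 'b \<Rightarrow> 'a + 'b" where
  "linv (Inl f) = Inl (inv\<^bsub>F\<^esub> f)"
| "linv (Inr g) = Inr (inv\<^bsub>G\<^esub> g)"

lemma linv_valid: "fp_valid F G l \<Longrightarrow> fp_valid F G (linv l)"
  by (cases l) auto
lemma linv_isl: "isl (linv l) = isl l"
  by (cases l) auto

lemma lop_linv: "lc F G l \<Longrightarrow> good M \<Longrightarrow> lop F G (linv l) (lop F G l M) = M"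
  by (cases l) (simp_all add: lop_comp_l lop_comp_r lop_one_l lop_one_r del: lop.simps)

lemma rhoP_ne_Ione: assumes "fp_reduced F G v" "v \<noteq> []" shows "rhoP v \<noteq> Ione"
proof
  assume e: "rhoP v = Ione"
  have D: "degP v" using deg[OF assms(1)] .
  have "\<exists>i j x. rhoP v i j (length v) x \<noteq> 0"
    using D assms(2) unfolding degP_def by (cases "isl (hd v)") blast+
  then show False using e assms(2) by (auto simp: Ione_def)
qed

lemma rhoP_D: "fp_reduced F G u \<Longrightarrow> fp_reduced F G v \<Longrightarrow> v \<noteq> [] \<Longrightarrow> (u = [] \<or> isl (hd u) \<noteq> isl (hd v)) \<Longrightarrow>
    rhoP u \<noteq> rhoP v"
proof (induction u arbitrary: v)
  case Nil
  then show ?case using rhoP_ne_Ione[of v] by (simp add: rhoP_def)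
next
  case (Cons a u')
  have a: "fp_valid F G a" "fp_reduced F G u'" "u' = [] \<or> isl a \<noteq> isl (hd u')"
    using Cons.prems(1) by (auto simp: fp_reduced_cons)
  have ab: "isl a \<noteq> isl (hd v)" using Cons.prems(4) by simp
  show ?case
  proof
    assume e: "rhoP (a # u') = rhoP v"
    have "rhoP u' = lop F G (linv a) (lop F G a (rhoP u'))"
      using lop_linv[OF valid_lc[OF a(1)] good_rhoP[OF reduced_lcw[OF a(2)]]] by simp
    also have "\<dots> = lop F G (linv a) (rhoP v)" using e by (simp add: rhoP_def del: lop.simps)
    also have "\<dots> = rhoP (linv a # v)" by (simp add: rhoP_def del: lop.simps)
    finally have e2: "rhoP u' = rhoP (linv a # v)" .
    have r: "fp_reduced F G (linv a # v)"
      using Cons.prems(2,3) ab linv_valid[OF a(1)] by (simp add: fp_reduced_cons linv_isl)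
    have "u' = [] \<or> isl (hd u') \<noteq> isl (hd (linv a # v))" using a(3) by (auto simp: linv_isl)
    then show False using Cons.IH[OF a(2) r] e2 by simp
  qed
qed

lemma rhoP_inj: "fp_reduced F G x \<Longrightarrow> fp_reduced F G y \<Longrightarrow> rhoP x = rhoP y \<Longrightarrow> x = y"
proof (induction x arbitrary: y)
  case Nil
  show ?case
  proof (rule ccontr)
    assume "[] \<noteq> y"
    then show False using rhoP_D[of "[]" y] Nil by auto
  qed
next
  case (Cons a x')
  have a: "fp_valid F G a" "fp_reduced F G x'" "x' = [] \<or> isl a \<noteq> isl (hd x')"
    using Cons.prems(1) by (auto simp: fp_reduced_cons)
  have ga: "good (rhoP x')" using good_rhoP[OF reduced_lcw[OF a(2)]] .
  show ?case
  proof (cases y)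
    case Nil
    then show ?thesis using rhoP_D[of "[]" "a # x'"] Cons.prems by auto
  next
    case (Cons b y')
    have b: "fp_valid F G b" "fp_reduced F G y'" "y' = [] \<or> isl b \<noteq> isl (hd y')"
      using Cons.prems(2) \<open>y = b # y'\<close> by (auto simp: fp_reduced_cons)
    have e: "lop F G a (rhoP x') = lop F G b (rhoP y')"
      using Cons.prems(3) \<open>y = b # y'\<close> by (simp add: rhoP_def del: lop.simps)
    have e1: "rhoP x' = lop F G (linv a) (lop F G b (rhoP y'))"
      using lop_linv[OF valid_lc[OF a(1)] ga] e by metis
    show ?thesis
    proof (cases "a = b")
      case True
      have "rhoP x' = rhoP y'" using e1 True lop_linv[OF valid_lc[OF b(1)] good_rhoP[OF reduced_lcw[OF b(2)]]] by simp
      then show ?thesis using Cons.IH[OF a(2) b(2)] True \<open>y = b # y'\<close> by simp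
    next
      case False
      show ?thesis
      proof (cases "isl a = isl b")
        case True
        obtain c where c: "fp_valid F G c" "isl c = isl a" "lop F G (linv a) (lop F G b (rhoP y')) = lop F G c (rhoP y')"
        proof (cases a; cases b)
          fix f1 f2 assume ab: "a = Inl f1" "b = Inl f2"
          have f: "f1 \<in> carrier F" "f2 \<in> carrier F" using a(1) b(1) ab by auto
          have "inv\<^bsub>F\<^esub> f1 \<otimes>\<^bsub>F\<^esub> f2 \<noteq> \<one>\<^bsub>F\<^esub>" using False ab f F.inv_mult_eq_one by auto
          then show ?thesis using f ab
            by (intro that[of "Inl (inv\<^bsub>F\<^esub> f1 \<otimes>\<^bsub>F\<^esub> f2)"]) (simp_all add: lop_comp_l del: lop.simps)
        next
          fix g1 g2 assume ab: "a = Inr g1" "b = Inr g2"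
          have g: "g1 \<in> carrier G" "g2 \<in> carrier G" using a(1) b(1) ab by auto
          have "inv\<^bsub>G\<^esub> g1 \<otimes>\<^bsub>G\<^esub> g2 \<noteq> \<one>\<^bsub>G\<^esub>" using False ab g G.inv_mult_eq_one by auto
          then show ?thesis using g ab
            by (intro that[of "Inr (inv\<^bsub>G\<^esub> g1 \<otimes>\<^bsub>G\<^esub> g2)"]) (simp_all add: lop_comp_r del: lop.simps)
        qed (use True in auto)
        have "rhoP x' = rhoP (c # y')" using e1 c(3) by (simp add: rhoP_def del: lop.simps)
        moreover have "fp_reduced F G (c # y')" using c b True by (auto simp: fp_reduced_cons)
        moreover have "x' = [] \<or> isl (hd x') \<noteq> isl (hd (c # y'))" using a(3) c(2) by auto
        ultimately show ?thesis using rhoP_D[OF a(2)] by blast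
      next
        case False
        have "rhoP x' = rhoP (linv a # b # y')" using e1 by (simp add: rhoP_def del: lop.simps)
        moreover have "fp_reduced F G (linv a # b # y')"
          using Cons.prems(2) \<open>y = b # y'\<close> False linv_valid[OF a(1)] by (simp add: fp_reduced_cons linv_isl)
        moreover have "x' = [] \<or> isl (hd x') \<noteq> isl (hd (linv a # b # y'))" using a(3) by (auto simp: linv_isl)
        ultimately show ?thesis using rhoP_D[OF a(2)] by blast
      qed
    qed
  qed
qed



lemma positions_lt: "q < 4 \<Longrightarrow> fst (positions ! q) < 2 \<and> snd (positions ! q) < 2"
proof -
  assume "q < 4"
  then have "q = 0 \<or> q = 1 \<or> q = 2 \<or> q = 3" by auto
  then show ?thesis by (auto simp: positions_def)
qed

lemma Pos_cong: "(\<And>i j. i < 2 \<Longrightarrow> j < 2 \<Longrightarrow> M i j = N i j) \<Longrightarrow> Pos M = Pos N"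
proof -
  assume h: "\<And>i j. i < 2 \<Longrightarrow> j < 2 \<Longrightarrow> M i j = N i j"
  have "ent M q = ent N q" if "q < 4" for q
    using h positions_lt[OF that] unfolding ent_def by (intro ext) simp
  then show ?thesis unfolding Pos_def by (intro iffI; elim exE conjE; intro exI conjI) auto
qed

lemma frak_iff: assumes x: "fp_reduced F G x" and y: "fp_reduced F G y"
  shows "((x, y) \<in> frakF F G LF LG) = Pos (\<lambda>i j n z. rhoP y i j n z - rhoP x i j n z)"
proof -
  have "pmat_pos F G LF LG (\<lambda>i j n z. rho F G y i j n z - rho F G x i j n z)
     = Pos (\<lambda>i j n z. rho F G y i j n z - rho F G x i j n z)" by (rule pmat_pos_Pos)
  also have "\<dots> = Pos (\<lambda>i j n z. rhoP y i j n z - rhoP x i j n z)"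
    by (rule Pos_cong) (simp add: rho_agree reduced_lcw x y)
  finally show ?thesis using x y by (simp add: frakF_def fp_carrier)
qed

lemma rhoP_diff_nz: assumes x: "fp_reduced F G x" and y: "fp_reduced F G y" and ne: "x \<noteq> y"
  shows "\<exists>q<4. \<exists>n. \<exists>k\<in>CC. ent (\<lambda>i j n z. rhoP y i j n z - rhoP x i j n z) q n k \<noteq> 0"
proof -
  have "rhoP x \<noteq> rhoP y" using rhoP_inj[OF x y] ne by blast
  then obtain i j n k where d: "rhoP x i j n k \<noteq> rhoP y i j n k" by (meson ext)
  have gx: "good (rhoP x)" and gy: "good (rhoP y)" using good_rhoP reduced_lcw x y by blast+
  have k: "k \<in> CC" and ij: "i < 2" "j < 2"
    using d good_wf[OF gx] good_wf[OF gy] gx gy unfolding good_def by (metis not_le)+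
  have "(i = 0 \<and> j = 0) \<or> (i = 1 \<and> j = 1) \<or> (i = 0 \<and> j = 1) \<or> (i = 1 \<and> j = 0)" using ij by auto
  then show ?thesis unfolding ex_less4 ent_simps using d k by auto
qed

lemma frak_ordering: "frakF F G LF LG \<in> orderings (free_product F G)"
proof -
  let ?R = "frakF F G LF LG"
  let ?D = "\<lambda>x y. (\<lambda>i j n z. rhoP y i j n z - rhoP x i j n z)"
  have sub: "?R \<subseteq> carrier (free_product F G) \<times> carrier (free_product F G)"
    by (auto simp: frakF_def)
  have mem: "fp_reduced F G x \<and> fp_reduced F G y \<and> Pos (?D x y)" if "(x, y) \<in> ?R" for x y
    using that frak_iff[of x y] by (auto simp: frakF_def fp_carrier)
  have tr: "trans ?R"
  proof (rule transI)
    fix x y z assume "(x, y) \<in> ?R" "(y, z) \<in> ?R"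
    then have h: "fp_reduced F G x" "fp_reduced F G z" "Pos (?D x y)" "Pos (?D y z)" using mem by blast+
    have "Pos (\<lambda>i j n w. ?D y z i j n w + ?D x y i j n w)" by (rule Pos_add[OF h(4) h(3)])
    moreover have "(\<lambda>i j n w. ?D y z i j n w + ?D x y i j n w) = ?D x z" by (intro ext) simp
    ultimately show "(x, z) \<in> ?R" using frak_iff[OF h(1) h(2)] by simp
  qed
  have ir: "irrefl ?R"
  proof (rule irrefl_onI)
    fix x
    show "(x, x) \<notin> ?R"
    proof
      assume "(x, x) \<in> ?R"
      then have "Pos (?D x x)" using mem by blast
      moreover have "?D x x = (\<lambda>i j n z. 0)" by (intro ext) simp
      ultimately show False using Pos_zero by simp
    qed
  qed
  have tot: "total_on (carrier (free_product F G)) ?R"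
  proof (rule total_onI)
    fix x y assume "x \<in> carrier (free_product F G)" "y \<in> carrier (free_product F G)" "x \<noteq> y"
    then have x: "fp_reduced F G x" and y: "fp_reduced F G y" and ne: "x \<noteq> y" by (auto simp: fp_carrier)
    have gx: "good (rhoP x)" and gy: "good (rhoP y)" using good_rhoP reduced_lcw x y by blast+
    have "Pos (?D x y) \<or> Pos (\<lambda>i j n z. - ?D x y i j n z)"
    proof (rule Pos_total)
      fix q n assume "q < (4::nat)"
      then show "finsupp (ent (?D x y) q n)" unfolding ent_def
        using good_fs[OF gx] good_fs[OF gy] by (intro finsupp_diff) auto
    next
      show "\<exists>q<4. \<exists>n. \<exists>k\<in>CC. ent (?D x y) q n k \<noteq> 0" by (rule rhoP_diff_nz[OF x y ne])
    qed
    moreover have "(\<lambda>i j n z. - ?D x y i j n z) = ?D y x" by (intro ext) simp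
    ultimately show "(x, y) \<in> ?R \<or> (y, x) \<in> ?R" using frak_iff[OF x y] frak_iff[OF y x] by simp
  qed
  have inv: "(a \<otimes>\<^bsub>free_product F G\<^esub> x, a \<otimes>\<^bsub>free_product F G\<^esub> y) \<in> ?R \<and>
      (x \<otimes>\<^bsub>free_product F G\<^esub> a, y \<otimes>\<^bsub>free_product F G\<^esub> a) \<in> ?R"
    if a: "a \<in> carrier (free_product F G)" and xy: "(x, y) \<in> ?R" for a x y
  proof -
    have h: "fp_reduced F G a" "fp_reduced F G x" "fp_reduced F G y" "Pos (?D x y)"
      using a mem[OF xy] by (auto simp: fp_carrier)
    have l: "lcw a" "lcw x" "lcw y" using h reduced_lcw by blast+
    have r1: "fp_reduced F G (foldr (fp_cons F G) a x)" "fp_reduced F G (foldr (fp_cons F G) a y)"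
      "fp_reduced F G (foldr (fp_cons F G) x a)" "fp_reduced F G (foldr (fp_cons F G) y a)"
      using h reduced_mult by blast+
    have "?D (foldr (fp_cons F G) a x) (foldr (fp_cons F G) a y) = Lw a (?D x y)"
      using l by (simp add: rhoP_mult Lw_sub)
    moreover have "Pos (Lw a (?D x y))" using Pos_Lw[OF l(1) h(4)] .
    moreover have "?D (foldr (fp_cons F G) x a) (foldr (fp_cons F G) y a) = Rw a (?D x y)"
      using l by (simp add: rhoP_mult_right Rw_sub)
    moreover have "Pos (Rw a (?D x y))" using Pos_Rw[OF l(1) h(4)] .
    ultimately show ?thesis using frak_iff r1 by (simp add: fp_mult)
  qed
  show ?thesis unfolding orderings_def strict_linear_order_on_def
    using sub tr ir tot inv by blast
qed


definition wl :: "'a \<Rightarrow> ('a + 'b) list" where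
  "wl f = (if f = \<one>\<^bsub>F\<^esub> then [] else [Inl f])"
definition wr :: "'b \<Rightarrow> ('a + 'b) list" where
  "wr g = (if g = \<one>\<^bsub>G\<^esub> then [] else [Inr g])"

lemma wl_red: "f \<in> carrier F \<Longrightarrow> fp_reduced F G (wl f)" by (simp add: wl_def)
lemma wr_red: "g \<in> carrier G \<Longrightarrow> fp_reduced F G (wr g)" by (simp add: wr_def)
lemma rhoP_wl: "f \<in> carrier F \<Longrightarrow> rhoP (wl f) = lop F G (Inl f) Ione"
  by (simp add: wl_def rhoP_def lop_one_l[OF good_one] del: lop.simps)
lemma rhoP_wr: "g \<in> carrier G \<Longrightarrow> rhoP (wr g) = lop F G (Inr g) Ione"
  by (simp add: wr_def rhoP_def lop_one_r[OF good_one] del: lop.simps)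

lemma Pos_antisym: "Pos M \<Longrightarrow> Pos (\<lambda>i j n x. - M i j n x) \<Longrightarrow> False"
proof -
  assume "Pos M" "Pos (\<lambda>i j n x. - M i j n x)"
  from Pos_add[OF this] have "Pos (\<lambda>i j n x. M i j n x + - M i j n x)" .
  moreover have "(\<lambda>i j n x. M i j n x + - M i j n x) = (\<lambda>i j n x. 0)" by (intro ext) simp
  ultimately show False using Pos_zero by simp
qed

lemma LF_frak_aux: assumes f: "f1 \<in> carrier F" "f2 \<in> carrier F" and r: "(f1, f2) \<in> LF"
  shows "Pos (\<lambda>i j n z. rhoP (wl f2) i j n z - rhoP (wl f1) i j n z)"
proof -
  have ne: "f1 \<noteq> f2" using r LFi by blast
  have E: "ent (\<lambda>i j n z. rhoP (wl f2) i j n z - rhoP (wl f1) i j n z) 0 0 k =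
      gr_delta (f2, \<one>\<^bsub>G\<^esub>) k - gr_delta (f1, \<one>\<^bsub>G\<^esub>) k" for k
    using f by (simp add: rhoP_wl ent_simps Ione_def lshd)
  have "lowc (\<lambda>i j n z. rhoP (wl f2) i j n z - rhoP (wl f1) i j n z) 0 0 (f2, \<one>\<^bsub>G\<^esub>)"
    unfolding lowc_def E using f ne r
    by (auto simp: gr_delta_def lx_iff)
  then show ?thesis unfolding Pos_iff by blast
qed

lemma LF_frak: assumes f: "f1 \<in> carrier F" "f2 \<in> carrier F"
  shows "((f1, f2) \<in> LF) = ((wl f1, wl f2) \<in> frakF F G LF LG)"
proof -
  have eq: "((wl f1, wl f2) \<in> frakF F G LF LG) = Pos (\<lambda>i j n z. rhoP (wl f2) i j n z - rhoP (wl f1) i j n z)"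
    by (rule frak_iff) (use f wl_red in auto)
  show ?thesis
  proof
    assume "(f1, f2) \<in> LF" then show "(wl f1, wl f2) \<in> frakF F G LF LG" using eq LF_frak_aux f by simp
  next
    assume "(wl f1, wl f2) \<in> frakF F G LF LG"
    then have P: "Pos (\<lambda>i j n z. rhoP (wl f2) i j n z - rhoP (wl f1) i j n z)" using eq by simp
    show "(f1, f2) \<in> LF"
    proof (rule ccontr)
      assume nr: "(f1, f2) \<notin> LF"
      show False
      proof (cases "f1 = f2")
        case True
        then have "(\<lambda>i j n z. rhoP (wl f2) i j n z - rhoP (wl f1) i j n z) = (\<lambda>i j n z. 0)" by (intro ext) simp
        then show False using P Pos_zero by simp
      next
        case False
        then have "(f2, f1) \<in> LF" using nr LFtot f by blast
        from LF_frak_aux[OF f(2) f(1) this] have "Pos (\<lambda>i j n z. - (rhoP (wl f2) i j n z - rhoP (wl f1) i j n z))"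
          by simp
        then show False using Pos_antisym[OF P] by simp
      qed
    qed
  qed
qed

lemma LG_frak_aux: assumes g: "g1 \<in> carrier G" "g2 \<in> carrier G" and r: "(g1, g2) \<in> LG"
  shows "Pos (\<lambda>i j n z. rhoP (wr g2) i j n z - rhoP (wr g1) i j n z)"
proof -
  have ne: "g1 \<noteq> g2" using r LGi by blast
  have E: "ent (\<lambda>i j n z. rhoP (wr g2) i j n z - rhoP (wr g1) i j n z) 1 0 k =
      gr_delta (\<one>\<^bsub>F\<^esub>, g2) k - gr_delta (\<one>\<^bsub>F\<^esub>, g1) k" for k
    using g by (simp add: rhoP_wr ent_simps Ione_def lshd)
  have E0: "ent (\<lambda>i j n z. rhoP (wr g2) i j n z - rhoP (wr g1) i j n z) 0 0 k = 0" for k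
    using g by (simp add: rhoP_wr ent_simps Ione_def lshd)
  have "lowc (\<lambda>i j n z. rhoP (wr g2) i j n z - rhoP (wr g1) i j n z) 0 1 (\<one>\<^bsub>F\<^esub>, g2)"
    unfolding lowc_def E using g ne r E0
    by (auto simp: gr_delta_def lx_iff LFi)
  then show ?thesis unfolding Pos_iff by blast
qed

lemma LG_frak: assumes g: "g1 \<in> carrier G" "g2 \<in> carrier G"
  shows "((g1, g2) \<in> LG) = ((wr g1, wr g2) \<in> frakF F G LF LG)"
proof -
  have eq: "((wr g1, wr g2) \<in> frakF F G LF LG) = Pos (\<lambda>i j n z. rhoP (wr g2) i j n z - rhoP (wr g1) i j n z)"
    by (rule frak_iff) (use g wr_red in auto)
  show ?thesis
  proof
    assume "(g1, g2) \<in> LG" then show "(wr g1, wr g2) \<in> frakF F G LF LG" using eq LG_frak_aux g by simp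
  next
    assume "(wr g1, wr g2) \<in> frakF F G LF LG"
    then have P: "Pos (\<lambda>i j n z. rhoP (wr g2) i j n z - rhoP (wr g1) i j n z)" using eq by simp
    show "(g1, g2) \<in> LG"
    proof (rule ccontr)
      assume nr: "(g1, g2) \<notin> LG"
      show False
      proof (cases "g1 = g2")
        case True
        then have "(\<lambda>i j n z. rhoP (wr g2) i j n z - rhoP (wr g1) i j n z) = (\<lambda>i j n z. 0)" by (intro ext) simp
        then show False using P Pos_zero by simp
      next
        case False
        then have "(g2, g1) \<in> LG" using nr LGtot g by blast
        from LG_frak_aux[OF g(2) g(1) this] have "Pos (\<lambda>i j n z. - (rhoP (wr g2) i j n z - rhoP (wr g1) i j n z))"
          by simp
        then show False using Pos_antisym[OF P] by simp
      qed
    qed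
  qed
qed

end

lemma Union_basic: "\<Union>{ord_basic H S | S. finite S \<and> S \<subseteq> carrier H} = orderings H"
proof
  show "\<Union>{ord_basic H S | S. finite S \<and> S \<subseteq> carrier H} \<subseteq> orderings H" by (auto simp: ord_basic_def)
  have "ord_basic H {} = orderings H" by (simp add: ord_basic_def)
  then show "orderings H \<subseteq> \<Union>{ord_basic H S | S. finite S \<and> S \<subseteq> carrier H}" by blast
qed

lemma topspace_ord: "topspace (ord_topology H) = orderings H"
  unfolding ord_topology_def topology_generated_by_topspace by (rule Union_basic)

lemma basic_open: "finite S \<Longrightarrow> S \<subseteq> carrier H \<Longrightarrow> openin (ord_topology H) (ord_basic H S)"
  unfolding ord_topology_def by (rule topology_generated_by_Basis) blast

lemma fgoI: "group F \<Longrightarrow> group G \<Longrightarrow> LF \<in> orderings F \<Longrightarrow> LG \<in> orderings G \<Longrightarrow> fgo F G LF LG"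
  by (simp add: fgo_def fg_def fgo_axioms_def)

context fg
begin

lemma gr_pos_cong: assumes sup: "{k \<in> CC. e k \<noteq> 0} \<subseteq> T"
  and ag: "\<forall>a\<in>T. \<forall>b\<in>T. ((a, b) \<in> lex_ord LF LG) = ((a, b) \<in> lex_ord LF' LG')"
  shows "gr_pos F G LF LG e = gr_pos F G LF' LG' e"
proof -
  have H: "(\<forall>y\<in>CC. e y \<noteq> 0 \<and> y \<noteq> m \<longrightarrow> (y, m) \<in> lex_ord LF LG) =
        (\<forall>y\<in>CC. e y \<noteq> 0 \<and> y \<noteq> m \<longrightarrow> (y, m) \<in> lex_ord LF' LG')" if m: "m \<in> CC" "0 < e m" for m
  proof -
    have mT: "m \<in> T" using m sup by auto
    have "((y, m) \<in> lex_ord LF LG) = ((y, m) \<in> lex_ord LF' LG')" if "y \<in> CC" "e y \<noteq> 0" for y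
    proof -
      have "y \<in> T" using that sup by blast
      then show ?thesis using ag mT by blast
    qed
    then show ?thesis by blast
  qed
  show ?thesis unfolding gr_pos_def carrier_DirProd[symmetric]
  proof -
    show "(\<exists>m\<in>CC. 0 < e m \<and> (\<forall>y\<in>CC. e y \<noteq> 0 \<and> y \<noteq> m \<longrightarrow> (y, m) \<in> lex_ord LF LG)) =
          (\<exists>m\<in>CC. 0 < e m \<and> (\<forall>y\<in>CC. e y \<noteq> 0 \<and> y \<noteq> m \<longrightarrow> (y, m) \<in> lex_ord LF' LG'))"
    proof
      assume "\<exists>m\<in>CC. 0 < e m \<and> (\<forall>y\<in>CC. e y \<noteq> 0 \<and> y \<noteq> m \<longrightarrow> (y, m) \<in> lex_ord LF LG)"
      then obtain m where m: "m \<in> CC" "0 < e m" "\<forall>y\<in>CC. e y \<noteq> 0 \<and> y \<noteq> m \<longrightarrow> (y, m) \<in> lex_ord LF LG" by blast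
      then show "\<exists>m\<in>CC. 0 < e m \<and> (\<forall>y\<in>CC. e y \<noteq> 0 \<and> y \<noteq> m \<longrightarrow> (y, m) \<in> lex_ord LF' LG')"
        using H[OF m(1,2)] by blast
    next
      assume "\<exists>m\<in>CC. 0 < e m \<and> (\<forall>y\<in>CC. e y \<noteq> 0 \<and> y \<noteq> m \<longrightarrow> (y, m) \<in> lex_ord LF' LG')"
      then obtain m where m: "m \<in> CC" "0 < e m" "\<forall>y\<in>CC. e y \<noteq> 0 \<and> y \<noteq> m \<longrightarrow> (y, m) \<in> lex_ord LF' LG'" by blast
      then show "\<exists>m\<in>CC. 0 < e m \<and> (\<forall>y\<in>CC. e y \<noteq> 0 \<and> y \<noteq> m \<longrightarrow> (y, m) \<in> lex_ord LF LG)"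
        using H[OF m(1,2)] by blast
    qed
  qed
qed

lemma lex_agree: assumes "\<forall>a\<in>fst ` T. \<forall>b\<in>fst ` T. ((a, b) \<in> LF) = ((a, b) \<in> LF')"
  "\<forall>a\<in>snd ` T. \<forall>b\<in>snd ` T. ((a, b) \<in> LG) = ((a, b) \<in> LG')"
  shows "\<forall>x\<in>T. \<forall>y\<in>T. ((x, y) \<in> lex_ord LF LG) = ((x, y) \<in> lex_ord LF' LG')"
proof (intro ballI)
  fix x y assume "x \<in> T" "y \<in> T"
  then have "fst x \<in> fst ` T" "fst y \<in> fst ` T" "snd x \<in> snd ` T" "snd y \<in> snd ` T" by auto
  then show "((x, y) \<in> lex_ord LF LG) = ((x, y) \<in> lex_ord LF' LG')"
    using assms by (cases x; cases y) (auto simp: lex_ord_def)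
qed

lemma pmat_pos_cong: assumes "\<And>i j n. (i, j) \<in> set positions \<Longrightarrow> gr_pos F G LF LG (M i j n) = gr_pos F G LF' LG' (M i j n)"
  shows "pmat_pos F G LF LG M = pmat_pos F G LF' LG' M"
proof -
  have C: "(case filter (\<lambda>(i, j). gr_nonzero F G (M i j n)) positions of (i, j) # _ \<Rightarrow> gr_pos F G LF LG (M i j n) | [] \<Rightarrow> False)
    = (case filter (\<lambda>(i, j). gr_nonzero F G (M i j n)) positions of (i, j) # _ \<Rightarrow> gr_pos F G LF' LG' (M i j n) | [] \<Rightarrow> False)" for n
  proof (cases "filter (\<lambda>(i, j). gr_nonzero F G (M i j n)) positions")
    case Nil then show ?thesis by simp
  next
    case (Cons p r)
    then have "p \<in> set positions" by (metis filter_is_subset list.set_intros(1) subsetD)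
    obtain i j where pij: "p = (i, j)" by (cases p)
    have "(i, j) \<in> set positions" using \<open>p \<in> set positions\<close> pij by simp
    then show ?thesis using assms[of i j n] by (simp add: Cons pij)
  qed
  show ?thesis unfolding pmat_pos_def C ..
qed

lemma frak_ord: "LF \<in> orderings F \<Longrightarrow> LG \<in> orderings G \<Longrightarrow> frakF F G LF LG \<in> orderings (free_product F G)"
  using fgo.frak_ordering[OF fgoI[OF F.is_group G.is_group]] by blast

lemma cont_local:
  assumes p0: "LF0 \<in> orderings F" "LG0 \<in> orderings G" and Sw: "finite Sw" "Sw \<subseteq> carrier (free_product F G)"
  shows "\<exists>A B. finite A \<and> A \<subseteq> carrier F \<and> finite B \<and> B \<subseteq> carrier G \<and> LF0 \<in> ord_basic F A \<and> LG0 \<in> ord_basic G B \<and>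
     (\<forall>LF\<in>ord_basic F A. \<forall>LG\<in>ord_basic G B. \<forall>s\<in>Sw.
        (([], s) \<in> frakF F G LF LG) = (([], s) \<in> frakF F G LF0 LG0))"
proof -
  interpret o0: fgo F G LF0 LG0 by (rule fgoI[OF F.is_group G.is_group p0])
  have red: "fp_reduced F G s" if "s \<in> Sw" for s using Sw(2) that by (auto simp: fp_carrier)
  define Supp where "Supp = (\<Union>s\<in>Sw. \<Union>i\<in>{0::nat, 1}. \<Union>j\<in>{0::nat, 1}. \<Union>n\<in>{..length s}.
      {k \<in> CC. rhoP s i j n k - Ione i j n k \<noteq> 0})"
  have fin: "finite Supp" unfolding Supp_def
  proof (intro finite_UN_I Sw(1) finite.intros finite_atMost)
    fix s i j n assume "s \<in> Sw"
    then have "good (rhoP s)" using good_rhoP reduced_lcw red by blast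
    then have "finsupp (\<lambda>k. rhoP s i j n k - Ione i j n k)" using good_one
      by (intro finsupp_diff) (auto simp: good_def)
    then show "finite {k \<in> CC. rhoP s i j n k - Ione i j n k \<noteq> 0}" unfolding finsupp_def
      by (rule rev_finite_subset) auto
  qed
  have SC: "Supp \<subseteq> CC" unfolding Supp_def by auto
  have supp: "{k \<in> CC. rhoP s i j n k - Ione i j n k \<noteq> 0} \<subseteq> Supp" if "s \<in> Sw" "i < 2" "j < 2" for s i j n
  proof (cases "n \<le> length s")
    case True
    have "i \<in> {0, 1}" "j \<in> {0, 1}" using that by auto
    then show ?thesis unfolding Supp_def using that(1) True by blast
  next
    case False
    have "o0.degP s" using o0.deg red that(1) by blast
    then have Z: "\<forall>n i j x. length s < n \<longrightarrow> rhoP s i j n x = 0" unfolding o0.degP_def by blast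
    have ln: "length s < n" using False by simp
    have "rhoP s i j n k = 0" for k using Z ln by blast
    moreover have "Ione i j n = (\<lambda>x. 0)" using False by (simp add: Ione_def)
    ultimately show ?thesis by simp
  qed
  define TF where "TF = fst ` Supp"
  define TG where "TG = snd ` Supp"
  have cx: "fst x \<in> carrier F \<and> snd x \<in> carrier G" if "x \<in> Supp" for x
  proof -
    have "x \<in> CC" using SC that by blast
    then show ?thesis by (cases x) simp
  qed
  have TF: "finite TF" "TF \<subseteq> carrier F" using fin cx unfolding TF_def by auto
  have TG: "finite TG" "TG \<subseteq> carrier G" using fin cx unfolding TG_def by auto
  define A where "A = {inv\<^bsub>F\<^esub> a \<otimes>\<^bsub>F\<^esub> b | a b. a \<in> TF \<and> b \<in> TF \<and> (a, b) \<in> LF0}"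
  define B where "B = {inv\<^bsub>G\<^esub> a \<otimes>\<^bsub>G\<^esub> b | a b. a \<in> TG \<and> b \<in> TG \<and> (a, b) \<in> LG0}"
  note nA = F.ord_nbhd[OF p0(1) TF, folded A_def]
  note nB = G.ord_nbhd[OF p0(2) TG, folded B_def]
  have main: "(([], s) \<in> frakF F G LF LG) = (([], s) \<in> frakF F G LF0 LG0)"
    if L: "LF \<in> ord_basic F A" "LG \<in> ord_basic G B" and s: "s \<in> Sw" for LF LG s
  proof -
    have ag: "\<forall>x\<in>Supp. \<forall>y\<in>Supp. ((x, y) \<in> lex_ord LF LG) = ((x, y) \<in> lex_ord LF0 LG0)"
      by (rule lex_agree) (use nA(4)[OF L(1)] nB(4)[OF L(2)] in \<open>auto simp: TF_def TG_def\<close>)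
    have "pmat_pos F G LF LG (\<lambda>i j n z. rho F G s i j n z - rho F G [] i j n z) =
          pmat_pos F G LF0 LG0 (\<lambda>i j n z. rho F G s i j n z - rho F G [] i j n z)"
    proof (rule pmat_pos_cong)
      fix i j n assume ij: "(i, j) \<in> set positions"
      then have ij2: "i < 2" "j < 2" by (auto simp: positions_def)
      have eq: "(\<lambda>z. rho F G s i j n z - rho F G [] i j n z) = (\<lambda>z. rhoP s i j n z - Ione i j n z)"
        using rho_agree[OF reduced_lcw[OF red[OF s]] ij2] rho_agree[of "[]" i j] ij2
        by (simp add: rhoP_def)
      show "gr_pos F G LF LG (\<lambda>z. rho F G s i j n z - rho F G [] i j n z) =
            gr_pos F G LF0 LG0 (\<lambda>z. rho F G s i j n z - rho F G [] i j n z)"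
        unfolding eq by (rule gr_pos_cong[OF supp[OF s ij2] ag])
    qed
    then show ?thesis using red[OF s] by (simp add: frakF_def fp_carrier)
  qed
  show ?thesis
  proof (intro exI[of _ A] exI[of _ B] conjI ballI)
    show "finite A" "A \<subseteq> carrier F" "LF0 \<in> ord_basic F A" using nA(1-3) by blast+
    show "finite B" "B \<subseteq> carrier G" "LG0 \<in> ord_basic G B" using nB(1-3) by blast+
    fix LF LG s assume "LF \<in> ord_basic F A" "LG \<in> ord_basic G B" "s \<in> Sw"
    then show "(([], s) \<in> frakF F G LF LG) = (([], s) \<in> frakF F G LF0 LG0)" by (rule main)
  qed
qed

end

context
  fixes F :: "('a, 'c) monoid_scheme" and G :: "('b, 'd) monoid_scheme"
  assumes gF: "group F" and gG: "group G"
begin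

interpretation fg F G by (simp add: fg_def gF gG)

lemma frak_cont: "continuous_map (prod_topology (ord_topology F) (ord_topology G))
           (ord_topology (free_product F G)) (\<lambda>(LF, LG). frakF F G LF LG)"
proof (unfold ord_topology_def[of "free_product F G"], rule continuous_on_generated_topo)
  let ?T1 = "prod_topology (ord_topology F) (ord_topology G)"
  let ?f = "\<lambda>(LF, LG). frakF F G LF LG"
  have top: "topspace ?T1 = orderings F \<times> orderings G" by (simp only: topspace_prod_topology topspace_ord)
  have "?f ` topspace ?T1 \<subseteq> orderings (free_product F G)"
  proof
    fix q assume "q \<in> ?f ` topspace ?T1"
    then obtain p where p: "p \<in> topspace ?T1" "q = ?f p" by blast
    obtain LF LG where pp: "p = (LF, LG)" by (cases p)
    have "LF \<in> orderings F" "LG \<in> orderings G" using p(1) pp top by auto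
    then show "q \<in> orderings (free_product F G)" using frak_ord p(2) pp by simp
  qed
  then show "?f ` topspace ?T1 \<subseteq> \<Union>{ord_basic (free_product F G) S |S. finite S \<and> S \<subseteq> carrier (free_product F G)}"
    unfolding Union_basic .
  fix U assume "U \<in> {ord_basic (free_product F G) S |S. finite S \<and> S \<subseteq> carrier (free_product F G)}"
  then obtain Sw where U: "U = ord_basic (free_product F G) Sw" and Sw: "finite Sw" "Sw \<subseteq> carrier (free_product F G)"
    by blast
  show "openin ?T1 (?f -` U \<inter> topspace ?T1)"
  proof (subst openin_subopen, intro ballI)
    fix p assume p: "p \<in> ?f -` U \<inter> topspace ?T1"
    obtain LF0 LG0 where pp: "p = (LF0, LG0)" by (cases p)
    have "(LF0, LG0) \<in> topspace ?T1" using p pp by blast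
    then have p0: "LF0 \<in> orderings F" "LG0 \<in> orderings G" unfolding top by blast+
    have "?f p \<in> U" using p by blast
    then have pin: "frakF F G LF0 LG0 \<in> U" using pp by simp
    from cont_local[OF p0 Sw] obtain A B where ABc: "finite A \<and> A \<subseteq> carrier F \<and> finite B \<and> B \<subseteq> carrier G \<and> LF0 \<in> ord_basic F A \<and> LG0 \<in> ord_basic G B \<and>
      (\<forall>LF\<in>ord_basic F A. \<forall>LG\<in>ord_basic G B. \<forall>s\<in>Sw. (([], s) \<in> frakF F G LF LG) = (([], s) \<in> frakF F G LF0 LG0))"
      by (elim exE) (rule that)
    note AB = conjunct1[OF ABc] conjunct1[OF conjunct2[OF ABc]] conjunct1[OF conjunct2[OF conjunct2[OF ABc]]]
      conjunct1[OF conjunct2[OF conjunct2[OF conjunct2[OF ABc]]]]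
      conjunct1[OF conjunct2[OF conjunct2[OF conjunct2[OF conjunct2[OF ABc]]]]]
      conjunct1[OF conjunct2[OF conjunct2[OF conjunct2[OF conjunct2[OF conjunct2[OF ABc]]]]]]
      conjunct2[OF conjunct2[OF conjunct2[OF conjunct2[OF conjunct2[OF conjunct2[OF ABc]]]]]]
    show "\<exists>T. openin ?T1 T \<and> p \<in> T \<and> T \<subseteq> ?f -` U \<inter> topspace ?T1"
    proof (intro exI conjI)
      show "openin ?T1 (ord_basic F A \<times> ord_basic G B)"
      proof -
        have "openin (ord_topology F) (ord_basic F A)" using AB(1,2) by (rule basic_open)
        moreover have "openin (ord_topology G) (ord_basic G B)" using AB(3,4) by (rule basic_open)
        ultimately show ?thesis unfolding openin_prod_Times_iff by blast
      qed
      show "p \<in> ord_basic F A \<times> ord_basic G B" using pp AB by simp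
      show "ord_basic F A \<times> ord_basic G B \<subseteq> ?f -` U \<inter> topspace ?T1"
      proof
        fix q assume q: "q \<in> ord_basic F A \<times> ord_basic G B"
        obtain LF LG where qq: "q = (LF, LG)" by (cases q)
        have L: "LF \<in> ord_basic F A" "LG \<in> ord_basic G B" using q qq by auto
        have O: "LF \<in> orderings F" "LG \<in> orderings G" using L by (auto simp: ord_basic_def)
        have pin': "frakF F G LF0 LG0 \<in> orderings (free_product F G) \<and> (\<forall>s\<in>Sw. ([], s) \<in> frakF F G LF0 LG0)"
          using pin unfolding U ord_basic_def fp_one by blast
        have "\<forall>s\<in>Sw. ([], s) \<in> frakF F G LF LG" using pin' AB(7) L by blast
        then have "frakF F G LF LG \<in> U"
          using frak_ord[OF O] unfolding U ord_basic_def fp_one by blast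
        then show "q \<in> ?f -` U \<inter> topspace ?T1" using qq O top by auto
      qed
    qed
  qed
qed

lemma frak_inj: "inj_on (\<lambda>(LF, LG). frakF F G LF LG) (orderings F \<times> orderings G)"
proof (rule inj_onI)
  fix p p' assume pO: "p \<in> orderings F \<times> orderings G" "p' \<in> orderings F \<times> orderings G"
    and pe: "(\<lambda>(LF, LG). frakF F G LF LG) p = (\<lambda>(LF, LG). frakF F G LF LG) p'"
  obtain LF LG where pp: "p = (LF, LG)" by (cases p)
  obtain LF' LG' where pp': "p' = (LF', LG')" by (cases p')
  have O: "LF \<in> orderings F" "LG \<in> orderings G" "LF' \<in> orderings F" "LG' \<in> orderings G"
    using pO pp pp' by auto
  have e: "frakF F G LF LG = frakF F G LF' LG'" using pe pp pp' by simp
  interpret o1: fgo F G LF LG by (rule fgoI[OF gF gG O(1,2)])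
  interpret o2: fgo F G LF' LG' by (rule fgoI[OF gF gG O(3,4)])
  have LFs: "(a, b) \<in> LF \<Longrightarrow> (a, b) \<in> LF'" for a b
  proof -
    assume ab: "(a, b) \<in> LF"
    then have c: "a \<in> carrier F" "b \<in> carrier F" using o1.LFsub by blast+
    have "(o1.wl a, o1.wl b) \<in> frakF F G LF LG" using o1.LF_frak[OF c] ab by blast
    then have "(o1.wl a, o1.wl b) \<in> frakF F G LF' LG'" using e by simp
    then show "(a, b) \<in> LF'" using o2.LF_frak[OF c] by blast
  qed
  have LFs': "(a, b) \<in> LF' \<Longrightarrow> (a, b) \<in> LF" for a b
  proof -
    assume ab: "(a, b) \<in> LF'"
    then have c: "a \<in> carrier F" "b \<in> carrier F" using o2.LFsub by blast+
    have "(o1.wl a, o1.wl b) \<in> frakF F G LF' LG'" using o2.LF_frak[OF c] ab by blast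
    then have "(o1.wl a, o1.wl b) \<in> frakF F G LF LG" using e by simp
    then show "(a, b) \<in> LF" using o1.LF_frak[OF c] by blast
  qed
  have LGs: "(a, b) \<in> LG \<Longrightarrow> (a, b) \<in> LG'" for a b
  proof -
    assume ab: "(a, b) \<in> LG"
    then have c: "a \<in> carrier G" "b \<in> carrier G" using o1.LGsub by blast+
    have "(o1.wr a, o1.wr b) \<in> frakF F G LF LG" using o1.LG_frak[OF c] ab by blast
    then have "(o1.wr a, o1.wr b) \<in> frakF F G LF' LG'" using e by simp
    then show "(a, b) \<in> LG'" using o2.LG_frak[OF c] by blast
  qed
  have LGs': "(a, b) \<in> LG' \<Longrightarrow> (a, b) \<in> LG" for a b
  proof -
    assume ab: "(a, b) \<in> LG'"
    then have c: "a \<in> carrier G" "b \<in> carrier G" using o2.LGsub by blast+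
    have "(o1.wr a, o1.wr b) \<in> frakF F G LF' LG'" using o2.LG_frak[OF c] ab by blast
    then have "(o1.wr a, o1.wr b) \<in> frakF F G LF LG" using e by simp
    then show "(a, b) \<in> LG" using o1.LG_frak[OF c] by blast
  qed
  have "LF = LF'" using LFs LFs' by auto
  moreover have "LG = LG'" using LGs LGs' by auto
  ultimately show "p = p'" using pp pp' by simp
qed

end

theorem theorem7p2:
  fixes F :: "('a, 'c) monoid_scheme" and G :: "('b, 'd) monoid_scheme"
  assumes "group F" and "group G"
  shows "continuous_map (prod_topology (ord_topology F) (ord_topology G))
           (ord_topology (free_product F G)) (\<lambda>(LF, LG). frakF F G LF LG)
       \<and> inj_on (\<lambda>(LF, LG). frakF F G LF LG) (orderings F \<times> orderings G)"
  using frak_cont[OF assms] frak_inj[OF assms] by blast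

end
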